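(* Let $n\ge 2$. (i) There exists a maximally antipodal subset of $\mathcal F_{2,2n-2}$ homeomorphic to the $2$-sphere $S^2$. (ii) There exists a maximally antipodal subset of $\mathrm{Iso}_2(\mathbb R^{2n})$ homeomorphic to $S^{2n-3}$.
   Context: $\mathcal F_{2,2n-2}$ is the manifold of pairs $(V,W)$ of linear subspaces of $\mathbb R^{2n}$ with $\dim V=2$, $\dim W=2n-2$, $V\subset W$ (a flag manifold of $\mathrm{SL}(2n,\mathbb R)$); two such pairs $(V,W),(V',W')$ are antipodal if $V\oplus W'=\mathbb R^{2n}$ and $V'\oplus W=\mathbb R^{2n}$. $\mathrm{Iso}_2(\mathbb R^{2n})$ is the manifold of $2$-planes in $\mathbb R^{2n}$ isotropic for a fixed symplectic form $\omega$; two isotropic planes $V,W$ are antipodal if $V\oplus W^{\perp_\omega}=\mathbb R^{2n}$. A subset $\Lambda$ of a flag manifold is antipodal if any two distinct points of $\Lambda$ are antipodal, and maximally antipodal if it is antipodal and every point of the flag manifold is non-antipodal to at least one point of $\Lambda$. *)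

theory Defs
  imports "HOL-Analysis.Analysis"
begin

text \<open>Ambient space: real^'n with CARD('n) = 2n. Linear subspaces are sets of vectors.\<close>

definition dsum_univ :: "'a::real_vector set \<Rightarrow> 'a set \<Rightarrow> bool" where
  "dsum_univ A B \<longleftrightarrow> A \<inter> B = {0} \<and> {a + b | a b. a \<in> A \<and> b \<in> B} = UNIV"

definition flag22 :: "((real^'n) set \<times> (real^'n) set) set" where
  "flag22 = {(V, W). subspace V \<and> subspace W \<and> dim V = 2 \<and> dim W = CARD('n) - 2 \<and> V \<subseteq> W}"

definition flag_antipodal :: "(real^'n) set \<times> (real^'n) set \<Rightarrow> (real^'n) set \<times> (real^'n) set \<Rightarrow> bool" where
  "flag_antipodal p q \<longleftrightarrow> dsum_univ (fst p) (snd q) \<and> dsum_univ (fst q) (snd p)"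

definition symplectic_form :: "('a::real_vector \<Rightarrow> 'a \<Rightarrow> real) \<Rightarrow> bool" where
  "symplectic_form \<omega> \<longleftrightarrow> bilinear \<omega> \<and> (\<forall>x. \<omega> x x = 0) \<and> (\<forall>x. (\<forall>y. \<omega> x y = 0) \<longrightarrow> x = 0)"

definition symp_orth :: "('a \<Rightarrow> 'a \<Rightarrow> real) \<Rightarrow> 'a set \<Rightarrow> 'a set" where
  "symp_orth \<omega> W = {x. \<forall>w\<in>W. \<omega> x w = 0}"

definition iso2 :: "(real^'n \<Rightarrow> real^'n \<Rightarrow> real) \<Rightarrow> (real^'n) set set" where
  "iso2 \<omega> = {V. subspace V \<and> dim V = 2 \<and> (\<forall>x\<in>V. \<forall>y\<in>V. \<omega> x y = 0)}"

definition iso_antipodal :: "('a::real_vector \<Rightarrow> 'a \<Rightarrow> real) \<Rightarrow> 'a set \<Rightarrow> 'a set \<Rightarrow> bool" where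
  "iso_antipodal \<omega> V W \<longleftrightarrow> dsum_univ V (symp_orth \<omega> W)"

definition antipodal_set :: "('x \<Rightarrow> 'x \<Rightarrow> bool) \<Rightarrow> 'x set \<Rightarrow> bool" where
  "antipodal_set ap L \<longleftrightarrow> (\<forall>x\<in>L. \<forall>y\<in>L. x \<noteq> y \<longrightarrow> ap x y)"

definition max_antipodal :: "'x set \<Rightarrow> ('x \<Rightarrow> 'x \<Rightarrow> bool) \<Rightarrow> 'x set \<Rightarrow> bool" where
  "max_antipodal X ap L \<longleftrightarrow> L \<subseteq> X \<and> antipodal_set ap L \<and> (\<forall>x\<in>X. \<exists>y\<in>L. \<not> ap x y)"

text \<open>Topology: a linear subspace V is identified with the matrix of the orthogonal projection
  onto V (the standard embedding of the Grassmannian); flags with the pair of such matrices.\<close>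
definition proj_mat :: "(real^'n) set \<Rightarrow> real^'n^'n" where
  "proj_mat V = matrix (closest_point V)"

definition flag_emb :: "(real^'n) set \<times> (real^'n) set \<Rightarrow> (real^'n^'n) \<times> (real^'n^'n)" where
  "flag_emb p = (proj_mat (fst p), proj_mat (snd p))"

end

theory Submission
  imports Defs
begin

lemma span2: "span {a, b} = {x. \<exists>\<alpha> \<beta>. x = \<alpha> *\<^sub>R a + \<beta> *\<^sub>R b}"
proof -
  have "span {a, b} = {x. \<exists>k. x - k *\<^sub>R a \<in> span {b}}" by (simp add: span_insert)
  also have "\<dots> = {x. \<exists>\<alpha> \<beta>. x = \<alpha> *\<^sub>R a + \<beta> *\<^sub>R b}"
  proof (auto simp: span_singleton)
    fix x k c assume "x - k *\<^sub>R a = c *\<^sub>R b"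
    then have "x = k *\<^sub>R a + c *\<^sub>R b" by (simp add: algebra_simps)
    then show "\<exists>\<alpha> \<beta>. x = \<alpha> *\<^sub>R a + \<beta> *\<^sub>R b" by blast
  next
    fix \<alpha> \<beta> show "\<exists>k. \<alpha> *\<^sub>R a + \<beta> *\<^sub>R b - k *\<^sub>R a \<in> range (\<lambda>k. k *\<^sub>R b)"
      by (rule exI[of _ \<alpha>]) auto
  qed
  finally show ?thesis .
qed

locale symp =
  fixes \<omega> :: "real^'n \<Rightarrow> real^'n \<Rightarrow> real"
  assumes sf: "symplectic_form \<omega>"
begin

lemma bil: "bilinear \<omega>" using sf by (simp add: symplectic_form_def)
lemma alt[simp]: "\<omega> x x = 0" using sf by (simp add: symplectic_form_def)
lemma nondeg: "(\<And>y. \<omega> x y = 0) \<Longrightarrow> x = 0" using sf by (auto simp: symplectic_form_def)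

lemma ladd[simp]: "\<omega> (x + y) z = \<omega> x z + \<omega> y z" by (rule bilinear_ladd[OF bil])
lemma radd[simp]: "\<omega> z (x + y) = \<omega> z x + \<omega> z y" by (rule bilinear_radd[OF bil])
lemma lmul[simp]: "\<omega> (c *\<^sub>R x) y = c * \<omega> x y" using bilinear_lmul[OF bil] by simp
lemma rmul[simp]: "\<omega> x (c *\<^sub>R y) = c * \<omega> x y" using bilinear_rmul[OF bil] by simp
lemma lsub[simp]: "\<omega> (x - y) z = \<omega> x z - \<omega> y z" by (rule bilinear_lsub[OF bil])
lemma rsub[simp]: "\<omega> z (x - y) = \<omega> z x - \<omega> z y" by (rule bilinear_rsub[OF bil])
lemma lneg[simp]: "\<omega> (- x) y = - \<omega> x y" by (rule bilinear_lneg[OF bil])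
lemma rneg[simp]: "\<omega> x (- y) = - \<omega> x y" by (rule bilinear_rneg[OF bil])
lemma lzero[simp]: "\<omega> 0 y = 0" by (rule bilinear_lzero[OF bil])
lemma rzero[simp]: "\<omega> x 0 = 0" by (rule bilinear_rzero[OF bil])

lemma antisym: "\<omega> y x = - \<omega> x y"
proof -
  have "0 = \<omega> (x + y) (x + y)" by simp
  also have "\<dots> = \<omega> x y + \<omega> y x" by (simp only: ladd radd) simp
  finally have "0 = \<omega> x y + \<omega> y x" .
  then show ?thesis by linarith
qed

definition nondeg_on :: "(real^'n) set \<Rightarrow> bool" where
  "nondeg_on V \<longleftrightarrow> (\<forall>x\<in>V. (\<forall>y\<in>V. \<omega> x y = 0) \<longrightarrow> x = 0)"

lemma reduce:
  assumes V: "subspace V" and xy: "x \<in> V" "y \<in> V" "\<omega> x y = 1"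
  defines "V' \<equiv> {z\<in>V. \<omega> x z = 0 \<and> \<omega> y z = 0}"
  shows "subspace V'" "V' \<subseteq> V" "x \<notin> V'"
    "\<And>v. v \<in> V \<Longrightarrow> v - \<omega> v y *\<^sub>R x - \<omega> x v *\<^sub>R y \<in> V'"
    "nondeg_on V \<Longrightarrow> nondeg_on V'"
proof -
  have yx: "\<omega> y x = -1" using antisym[of y x] xy by simp
  show "subspace V'" unfolding V'_def subspace_def
    using V by (auto simp: subspace_def)
  show "V' \<subseteq> V" unfolding V'_def by auto
  show "x \<notin> V'" unfolding V'_def using yx by auto
  show pv: "\<And>v. v \<in> V \<Longrightarrow> v - \<omega> v y *\<^sub>R x - \<omega> x v *\<^sub>R y \<in> V'"
  proof -
    fix v assume v: "v \<in> V"
    have "v - \<omega> v y *\<^sub>R x - \<omega> x v *\<^sub>R y \<in> V"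
      using V v xy by (intro subspace_diff subspace_scale) auto
    moreover have "\<omega> y v = - \<omega> v y" by (rule antisym)
    ultimately show "v - \<omega> v y *\<^sub>R x - \<omega> x v *\<^sub>R y \<in> V'"
      unfolding V'_def using xy yx by (simp add: algebra_simps)
  qed
  assume nd: "nondeg_on V"
  show "nondeg_on V'"
    unfolding nondeg_on_def
  proof (intro ballI impI)
    fix z assume z: "z \<in> V'" and h: "\<forall>w\<in>V'. \<omega> z w = 0"
    have "\<forall>v\<in>V. \<omega> z v = 0"
    proof
      fix v assume v: "v \<in> V"
      have "\<omega> z (v - \<omega> v y *\<^sub>R x - \<omega> x v *\<^sub>R y) = 0" using h pv[OF v] by blast
      moreover have "\<omega> z x = 0" "\<omega> z y = 0" using z antisym[of z x] antisym[of z y]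
        unfolding V'_def by auto
      ultimately show "\<omega> z v = 0" by simp
    qed
    then show "z = 0" using nd z unfolding nondeg_on_def V'_def by auto
  qed
qed

lemma compat:
  "subspace V \<Longrightarrow> nondeg_on V \<Longrightarrow> \<exists>K. linear K \<and> (\<forall>v\<in>V. K v \<in> V) \<and> (\<forall>v\<in>V. K (K v) = - v)
     \<and> (\<forall>u\<in>V. \<forall>v\<in>V. \<omega> u (K v) = \<omega> v (K u)) \<and> (\<forall>u\<in>V. u \<noteq> 0 \<longrightarrow> \<omega> u (K u) < 0)"
proof (induction "dim V" arbitrary: V rule: less_induct)
  case less
  show ?case
  proof (cases "V \<subseteq> {0}")
    case True
    then show ?thesis by (intro exI[of _ id]) (auto simp: linear_id)
  next
    case False
    then obtain x where x: "x \<in> V" "x \<noteq> 0" by auto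
    then obtain y0 where y0: "y0 \<in> V" "\<omega> x y0 \<noteq> 0" using less.prems unfolding nondeg_on_def by auto
    define y where "y = (1 / \<omega> x y0) *\<^sub>R y0"
    have y: "y \<in> V" "\<omega> x y = 1" using y0 less.prems(1) by (auto simp: y_def subspace_scale)
    define V' where "V' = {z\<in>V. \<omega> x z = 0 \<and> \<omega> y z = 0}"
    note R = reduce[OF less.prems(1) x(1) y, folded V'_def]
    have s1: "span V' = V'" "span V = V" using R(1) less.prems(1) by simp_all
    moreover have s2: "V' \<subset> V" using R(2,3) x(1) by auto
    ultimately have "dim V' < dim V" using dim_psubset[of V' V] by argo
    from less.hyps[OF this R(1) R(5)[OF less.prems(2)]] obtain K' where K':
      "linear K'" "\<forall>v\<in>V'. K' v \<in> V'" "\<forall>v\<in>V'. K' (K' v) = - v"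
      "\<forall>u\<in>V'. \<forall>v\<in>V'. \<omega> u (K' v) = \<omega> v (K' u)" "\<forall>u\<in>V'. u \<noteq> 0 \<longrightarrow> \<omega> u (K' u) < 0"
      by blast
    define p where "p v = v - \<omega> v y *\<^sub>R x - \<omega> x v *\<^sub>R y" for v
    define K where "K v = K' (p v) - \<omega> v y *\<^sub>R y + \<omega> x v *\<^sub>R x" for v
    have pV': "p v \<in> V'" if "v \<in> V" for v using R(4)[OF that] by (simp add: p_def)
    have V'x: "\<omega> x w = 0" "\<omega> y w = 0" "\<omega> w x = 0" "\<omega> w y = 0" if "w \<in> V'" for w
      using that antisym[of w x] antisym[of w y] by (auto simp: V'_def)
    have yx: "\<omega> y x = -1" using antisym[of y x] y by simp
    have padd: "p (a + b) = p a + p b" for a b by (simp add: p_def algebra_simps)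
    have pscale: "p (c *\<^sub>R a) = c *\<^sub>R p a" for c a by (simp add: p_def algebra_simps)
    have decomp: "v = p v + \<omega> v y *\<^sub>R x + \<omega> x v *\<^sub>R y" for v by (simp add: p_def)
    have pV'id: "p w = w" if "w \<in> V'" for w using V'x[OF that] by (simp add: p_def)
    have om_p: "\<omega> u w = \<omega> (p u) w" if "w \<in> V'" for u w
    proof -
      have "\<omega> u w = \<omega> (p u + \<omega> u y *\<^sub>R x + \<omega> x u *\<^sub>R y) w" using decomp[of u] by simp
      also have "\<dots> = \<omega> (p u) w" using V'x[OF that] by simp
      finally show ?thesis .
    qed
    have linK: "linear K"
      by (rule linearI) (simp_all add: K_def padd pscale linear_add[OF K'(1)] linear_scale[OF K'(1)] algebra_simps)
    have KV: "K v \<in> V" if "v \<in> V" for v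
    proof -
      have "K' (p v) \<in> V" using K'(2) pV'[OF that] R(2) by blast
      then show ?thesis unfolding K_def using less.prems(1) x(1) y(1)
        by (intro subspace_add subspace_diff subspace_scale) auto
    qed
    have K'pV: "K' (p v) \<in> V'" if "v \<in> V" for v using K'(2) pV'[OF that] by blast
    have pK: "p (K v) = K' (p v)" and oKy: "\<omega> (K v) y = \<omega> x v" and oxK: "\<omega> x (K v) = - \<omega> v y"
      if "v \<in> V" for v
    proof -
      show o1: "\<omega> (K v) y = \<omega> x v" using V'x[OF K'pV[OF that]] y(2) by (simp add: K_def)
      show o2: "\<omega> x (K v) = - \<omega> v y" using V'x[OF K'pV[OF that]] y(2) by (simp add: K_def)
      show "p (K v) = K' (p v)" unfolding p_def[of "K v"] o1 o2 by (simp add: K_def)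
    qed
    have KK: "K (K v) = - v" if "v \<in> V" for v
    proof -
      have "K (K v) = K' (K' (p v)) - \<omega> x v *\<^sub>R y - \<omega> v y *\<^sub>R x"
        unfolding K_def[of "K v"] pK[OF that] oKy[OF that] oxK[OF that] by simp
      also have "\<dots> = - p v - \<omega> x v *\<^sub>R y - \<omega> v y *\<^sub>R x" using K'(3) pV'[OF that] by simp
      also have "\<dots> = - v" by (simp add: p_def)
      finally show ?thesis .
    qed
    have oK: "\<omega> u (K v) = \<omega> (p u) (K' (p v)) - \<omega> v y * \<omega> u y + \<omega> x v * \<omega> u x" if "v \<in> V" for u v
      using om_p[OF K'pV[OF that], of u] by (simp add: K_def)
    have sym: "\<omega> u (K v) = \<omega> v (K u)" if "u \<in> V" "v \<in> V" for u v
    proof -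
      have "\<omega> (p u) (K' (p v)) = \<omega> (p v) (K' (p u))" using K'(4) pV' that by blast
      moreover have "\<omega> u x = - \<omega> x u" "\<omega> v x = - \<omega> x v" using antisym[of u x] antisym[of v x] by auto
      ultimately show ?thesis unfolding oK[OF that(2)] oK[OF that(1)] by (simp add: algebra_simps)
    qed
    have neg: "\<omega> u (K u) < 0" if "u \<in> V" "u \<noteq> 0" for u
    proof -
      have e: "\<omega> u (K u) = \<omega> (p u) (K' (p u)) - (\<omega> u y)\<^sup>2 - (\<omega> x u)\<^sup>2"
        unfolding oK[OF that(1)] using antisym[of u x] by (simp add: power2_eq_square)
      have le: "\<omega> (p u) (K' (p u)) \<le> 0" using K'(5) pV'[OF that(1)] by (cases "p u = 0") (auto simp: linear_0[OF K'(1)] intro: less_imp_le)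
      show ?thesis
      proof (cases "p u = 0")
        case False
        then have "\<omega> (p u) (K' (p u)) < 0" using K'(5) pV'[OF that(1)] by blast
        then show ?thesis unfolding e by (smt (verit) zero_le_power2)
      next
        case True
        then have "\<omega> u y \<noteq> 0 \<or> \<omega> x u \<noteq> 0" using decomp[of u] that(2) by auto
        then have "(\<omega> u y)\<^sup>2 + (\<omega> x u)\<^sup>2 > 0" by (metis add_pos_nonneg add_nonneg_pos zero_le_power2 zero_less_power2)
        then show ?thesis unfolding e using le by linarith
      qed
    qed
    show ?thesis using linK KV KK sym neg by blast
  qed
qed

end

lemma indep2:
  fixes a b :: "'a::real_vector"
  assumes "\<And>\<alpha> \<beta>. \<alpha> *\<^sub>R a + \<beta> *\<^sub>R b = 0 \<Longrightarrow> \<alpha> = 0 \<and> \<beta> = 0"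
  shows "independent {a, b}" "a \<noteq> b" "a \<noteq> 0" "b \<noteq> 0"
proof -
  show ab: "a \<noteq> b" using assms[of 1 "-1"] by auto
  show a0: "a \<noteq> 0" using assms[of 1 0] by auto
  show b0: "b \<noteq> 0" using assms[of 0 1] by auto
  have "a \<notin> span {b}"
  proof
    assume "a \<in> span {b}"
    then obtain k where "a = k *\<^sub>R b" by (auto simp: span_singleton)
    then have h: "1 *\<^sub>R a + (- k) *\<^sub>R b = 0" by simp
    show False using assms[OF h] by simp
  qed
  then show "independent {a, b}" using b0 ab
    by (simp add: independent_insert)
qed

lemma dim_span2:
  fixes a b :: "'a::euclidean_space"
  assumes "\<And>\<alpha> \<beta>. \<alpha> *\<^sub>R a + \<beta> *\<^sub>R b = 0 \<Longrightarrow> \<alpha> = 0 \<and> \<beta> = 0"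
  shows "dim (span {a, b}) = 2"
proof -
  have "independent {a,b}" "a \<noteq> b" using indep2[of a b] assms by blast+
  then show ?thesis by (simp add: dim_eq_card_independent)
qed

locale sympK = symp \<omega> for \<omega> :: "real^'n \<Rightarrow> real^'n \<Rightarrow> real" +
  fixes e f :: "real^'n" and K :: "real^'n \<Rightarrow> real^'n" and C :: "(real^'n) set"
  assumes ef: "\<omega> e f = 1"
  and C_def: "C = {z. \<omega> e z = 0 \<and> \<omega> f z = 0}"
  and Klin: "linear K" and KC: "\<And>v. v \<in> C \<Longrightarrow> K v \<in> C"
  and KK: "\<And>v. v \<in> C \<Longrightarrow> K (K v) = - v"
  and Ksym: "\<And>u v. u \<in> C \<Longrightarrow> v \<in> C \<Longrightarrow> \<omega> u (K v) = \<omega> v (K u)"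
  and Kneg: "\<And>u. u \<in> C \<Longrightarrow> u \<noteq> 0 \<Longrightarrow> \<omega> u (K u) < 0"
begin

definition G where "G u v = - \<omega> u (K v)"
definition a where "a u = e + u"
definition b where "b u = f + K u"
definition Y where "Y u = span {a u, b u}"
definition S where "S = {u \<in> C. G u u = 1}"

lemma fe: "\<omega> f e = -1" using antisym[of f e] ef by simp

lemma Cfacts: assumes "u \<in> C" shows "\<omega> e u = 0" "\<omega> f u = 0" "\<omega> u e = 0" "\<omega> u f = 0"
  using assms antisym[of u e] antisym[of u f] by (auto simp: C_def)

lemma subC: "subspace C" unfolding C_def subspace_def by auto

lemma Kadd[simp]: "K (x + y) = K x + K y" by (rule linear_add[OF Klin])
lemma Kscale[simp]: "K (c *\<^sub>R x) = c *\<^sub>R K x" by (rule linear_scale[OF Klin])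
lemma Kdiff[simp]: "K (x - y) = K x - K y" by (rule linear_diff[OF Klin])
lemma Kneg'[simp]: "K (- x) = - K x" by (rule linear_neg[OF Klin])
lemma K0[simp]: "K 0 = 0" by (rule linear_0[OF Klin])

lemma Gladd[simp]: "G (x + y) z = G x z + G y z" by (simp add: G_def)
lemma Gradd[simp]: "G z (x + y) = G z x + G z y" by (simp add: G_def)
lemma Glmul[simp]: "G (c *\<^sub>R x) y = c * G x y" by (simp add: G_def)
lemma Grmul[simp]: "G x (c *\<^sub>R y) = c * G x y" by (simp add: G_def)
lemma Glsub[simp]: "G (x - y) z = G x z - G y z" by (simp add: G_def)
lemma Grsub[simp]: "G z (x - y) = G z x - G z y" by (simp add: G_def)
lemma Glneg[simp]: "G (- x) y = - G x y" by (simp add: G_def)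
lemma Grneg[simp]: "G x (- y) = - G x y" by (simp add: G_def)
lemma Gl0[simp]: "G 0 y = 0" by (simp add: G_def)
lemma Gr0[simp]: "G x 0 = 0" by (simp add: G_def)

lemma Gsym: "u \<in> C \<Longrightarrow> v \<in> C \<Longrightarrow> G u v = G v u" by (simp add: G_def Ksym)
lemma Gpos: "u \<in> C \<Longrightarrow> u \<noteq> 0 \<Longrightarrow> G u u > 0" using Kneg by (simp add: G_def)
lemma Gnn: "u \<in> C \<Longrightarrow> G u u \<ge> 0" using Gpos[of u] by (cases "u = 0") auto
lemma GK: "v \<in> C \<Longrightarrow> G u (K v) = \<omega> u v" by (simp add: G_def KK)
lemma GKK: "u \<in> C \<Longrightarrow> v \<in> C \<Longrightarrow> G (K u) (K v) = G u v"
  by (simp add: GK KC) (metis G_def Ksym antisym minus_minus)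
lemma oKK: "u \<in> C \<Longrightarrow> v \<in> C \<Longrightarrow> \<omega> (K u) (K v) = \<omega> u v"
  using GKK[of u "K v"] by (simp add: G_def KK KC)
lemma GselfK: "u \<in> C \<Longrightarrow> G u (K u) = 0" by (simp add: GK)
lemma oK: "\<omega> u (K v) = - G u v" by (simp add: G_def)
lemma Gzero: "u \<in> C \<Longrightarrow> G u u = 0 \<Longrightarrow> u = 0" using Gpos by fastforce

lemma mat:
  assumes "u \<in> C" "v \<in> C"
  shows "\<omega> (a u) (a v) = \<omega> u v" "\<omega> (a u) (b v) = 1 - G u v"
        "\<omega> (b u) (a v) = G u v - 1" "\<omega> (b u) (b v) = \<omega> u v"
proof -
  note Cfacts[OF assms(1)] Cfacts[OF assms(2)] Cfacts[OF KC[OF assms(1)]] Cfacts[OF KC[OF assms(2)]]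
  then show "\<omega> (a u) (a v) = \<omega> u v" "\<omega> (a u) (b v) = 1 - G u v"
    "\<omega> (b u) (b v) = \<omega> u v"
    using ef oKK[OF assms] by (simp_all add: a_def b_def oK)
  have "\<omega> (K u) v = G u v" using antisym[of "K u" v] Gsym[OF assms] by (simp add: oK)
  then show "\<omega> (b u) (a v) = G u v - 1"
    using \<open>\<omega> f v = 0\<close> \<open>\<omega> (K u) e = 0\<close> fe by (simp add: a_def b_def)
qed

lemma ab_indep:
  assumes "u \<in> C"
  shows "\<alpha> *\<^sub>R a u + \<beta> *\<^sub>R b u = 0 \<Longrightarrow> \<alpha> = 0 \<and> \<beta> = 0"
proof -
  assume h: "\<alpha> *\<^sub>R a u + \<beta> *\<^sub>R b u = 0"
  note c = Cfacts[OF assms] Cfacts[OF KC[OF assms]]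
  have "\<omega> (\<alpha> *\<^sub>R a u + \<beta> *\<^sub>R b u) f = 0" "\<omega> e (\<alpha> *\<^sub>R a u + \<beta> *\<^sub>R b u) = 0" using h by simp_all
  then show ?thesis using c ef by (simp add: a_def b_def)
qed

lemma in_symp_orth:
  "x \<in> symp_orth \<omega> (Y v) \<longleftrightarrow> \<omega> x (a v) = 0 \<and> \<omega> x (b v) = 0"
proof
  have "a v \<in> Y v" "b v \<in> Y v" by (simp_all add: Y_def span_base)
  then show "x \<in> symp_orth \<omega> (Y v) \<Longrightarrow> \<omega> x (a v) = 0 \<and> \<omega> x (b v) = 0"
    by (simp add: symp_orth_def)
  show "\<omega> x (a v) = 0 \<and> \<omega> x (b v) = 0 \<Longrightarrow> x \<in> symp_orth \<omega> (Y v)"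
    unfolding symp_orth_def Y_def span2 by auto
qed

lemma Y_iso2: assumes "u \<in> S" shows "Y u \<in> iso2 \<omega>"
proof -
  have u: "u \<in> C" "G u u = 1" using assms by (auto simp: S_def)
  have "dim (Y u) = 2" unfolding Y_def by (rule dim_span2) (rule ab_indep[OF u(1)])
  moreover have "\<omega> x y = 0" if "x \<in> Y u" "y \<in> Y u" for x y
    using that mat[OF u(1) u(1)] u(2) unfolding Y_def span2 by (auto simp: algebra_simps)
  ultimately show ?thesis unfolding iso2_def Y_def by auto
qed

lemma S_sub: "u \<in> S \<Longrightarrow> u \<in> C" by (simp add: S_def)

lemma Y_antipodal:
  assumes "u \<in> S" "v \<in> S" "u \<noteq> v"
  shows "iso_antipodal \<omega> (Y u) (Y v)"
proof -
  have u: "u \<in> C" "G u u = 1" and v: "v \<in> C" "G v v = 1" using assms by (auto simp: S_def)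
  define c where "c = \<omega> u v"
  define d where "d = 1 - G u v"
  have D: "c\<^sup>2 + d\<^sup>2 > 0"
  proof (rule ccontr)
    assume "\<not> ?thesis"
    then have "c = 0" "d = 0" by (smt (verit) zero_le_power2 power2_less_eq_zero_iff)+
    then have "G (u - v) (u - v) = 0" using u v Gsym[OF u(1) v(1)] by (simp add: d_def)
    then have "u - v = 0" using Gzero subC u(1) v(1) subspace_diff by blast
    then show False using assms(3) by simp
  qed
  note m = mat[OF u(1) v(1), folded c_def]
  have m2: "\<omega> (a u) (b v) = d" "\<omega> (b u) (a v) = - d" using m by (simp_all add: d_def)
  have int: "Y u \<inter> symp_orth \<omega> (Y v) = {0}"
  proof (auto simp: in_symp_orth)
    show "0 \<in> Y u" by (simp add: Y_def span_zero)
  next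
    fix x assume x: "x \<in> Y u" "\<omega> x (a v) = 0" "\<omega> x (b v) = 0"
    then obtain \<alpha> \<beta> where xe: "x = \<alpha> *\<^sub>R a u + \<beta> *\<^sub>R b u" by (auto simp: Y_def span2)
    have e1: "\<alpha> * c - \<beta> * d = 0" "\<alpha> * d + \<beta> * c = 0" using x(2,3) m m2 unfolding xe by (simp_all add: d_def algebra_simps)
    have "\<alpha> * (c\<^sup>2 + d\<^sup>2) = c * (\<alpha> * c - \<beta> * d) + d * (\<alpha> * d + \<beta> * c)"
      "\<beta> * (c\<^sup>2 + d\<^sup>2) = c * (\<alpha> * d + \<beta> * c) - d * (\<alpha> * c - \<beta> * d)"
      by (simp_all add: algebra_simps power2_eq_square)
    then have z: "\<alpha> * (c\<^sup>2 + d\<^sup>2) = 0" "\<beta> * (c\<^sup>2 + d\<^sup>2) = 0" using e1 by simp_all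
    have "\<alpha> = 0" using z(1) D by (metis less_irrefl mult_eq_0_iff)
    moreover have "\<beta> = 0" using z(2) D by (metis less_irrefl mult_eq_0_iff)
    ultimately show "x = 0" unfolding xe by simp
  qed
  have sum: "{p + q |p q. p \<in> Y u \<and> q \<in> symp_orth \<omega> (Y v)} = UNIV"
  proof (auto)
    fix w
    define m1 where "m1 = \<omega> w (a v)"
    define m2' where "m2' = \<omega> w (b v)"
    define \<alpha> where "\<alpha> = (c * m1 + d * m2') / (c\<^sup>2 + d\<^sup>2)"
    define \<beta> where "\<beta> = (c * m2' - d * m1) / (c\<^sup>2 + d\<^sup>2)"
    define p where "p = \<alpha> *\<^sub>R a u + \<beta> *\<^sub>R b u"
    have pY: "p \<in> Y u" unfolding p_def Y_def span2 by blast
    have Dn: "c * c + d * d \<noteq> 0" using D by (metis less_irrefl power2_eq_square)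
    have "\<alpha> * c - \<beta> * d = (m1 * (c * c + d * d)) / (c * c + d * d)"
      "\<alpha> * d + \<beta> * c = (m2' * (c * c + d * d)) / (c * c + d * d)"
      unfolding \<alpha>_def \<beta>_def power2_eq_square by (simp_all add: add_divide_distrib[symmetric] diff_divide_distrib[symmetric] algebra_simps)
    then have h1: "\<alpha> * c - \<beta> * d = m1" "\<alpha> * d + \<beta> * c = m2'" using Dn by auto
    have "w - p \<in> symp_orth \<omega> (Y v)" unfolding in_symp_orth p_def
      using m(1) m(4) m2 h1 by (simp add: m1_def m2'_def)
    then show "\<exists>p q. w = p + q \<and> p \<in> Y u \<and> q \<in> symp_orth \<omega> (Y v)" using pY
      by (intro exI[of _ p] exI[of _ "w - p"]) auto
  qed
  show ?thesis unfolding iso_antipodal_def dsum_univ_def using int sum by auto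
qed

lemma Y_not_self:
  assumes "u \<in> S" shows "\<not> iso_antipodal \<omega> (Y u) (Y u)"
proof -
  have u: "u \<in> C" "G u u = 1" using assms by (auto simp: S_def)
  have "a u \<in> Y u" by (simp add: Y_def span_base)
  moreover have "a u \<in> symp_orth \<omega> (Y u)" unfolding in_symp_orth using mat[OF u(1) u(1)] u(2) by simp
  moreover have "a u \<noteq> 0" using ab_indep[OF u(1), of 1 0] by auto
  ultimately show ?thesis unfolding iso_antipodal_def dsum_univ_def by blast
qed

lemma Y_inj: "u \<in> S \<Longrightarrow> v \<in> S \<Longrightarrow> Y u = Y v \<Longrightarrow> u = v"
  using Y_antipodal Y_not_self by metis

lemma dimC: "dim C = CARD('n) - 2"
proof -
  have eq: "\<alpha> *\<^sub>R e + \<beta> *\<^sub>R f = 0 \<Longrightarrow> \<alpha> = 0 \<and> \<beta> = 0" for \<alpha> \<beta>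
  proof -
    assume h: "\<alpha> *\<^sub>R e + \<beta> *\<^sub>R f = 0"
    have "\<omega> (\<alpha> *\<^sub>R e + \<beta> *\<^sub>R f) f = 0" "\<omega> e (\<alpha> *\<^sub>R e + \<beta> *\<^sub>R f) = 0" using h by simp_all
    then show ?thesis using ef by simp
  qed
  have d2: "dim (span {e, f}) = 2" by (rule dim_span2[OF eq])
  have int: "span {e, f} \<inter> C = {0}"
  proof (auto simp: span_zero subC subspace_0)
    fix x assume "x \<in> span {e, f}" "x \<in> C"
    then obtain \<alpha> \<beta> where xe: "x = \<alpha> *\<^sub>R e + \<beta> *\<^sub>R f" and c: "\<omega> e x = 0" "\<omega> f x = 0"
      by (auto simp: span2 C_def)
    then have "\<beta> = 0" "\<alpha> = 0" using ef fe by simp_all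
    then show "x = 0" using xe by simp
  qed
  have sum: "{x + y |x y. x \<in> span {e, f} \<and> y \<in> C} = UNIV"
  proof auto
    fix v
    define p where "p = v - \<omega> v f *\<^sub>R e - \<omega> e v *\<^sub>R f"
    have "p \<in> C" unfolding C_def p_def using ef fe antisym[of v e] antisym[of v f] by simp
    moreover have "\<omega> v f *\<^sub>R e + \<omega> e v *\<^sub>R f \<in> span {e, f}" unfolding span2 by blast
    ultimately show "\<exists>x y. v = x + y \<and> x \<in> span {e, f} \<and> y \<in> C"
      by (intro exI[of _ "\<omega> v f *\<^sub>R e + \<omega> e v *\<^sub>R f"] exI[of _ p]) (auto simp: p_def)
  qed
  have "dim (UNIV :: (real^'n) set) + dim (span {e, f} \<inter> C) = dim (span {e, f}) + dim C"
    using dim_sums_Int[OF subspace_span subC, of "{e, f}"] sum by simp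
  then show ?thesis using int d2 by simp
qed

end

lemma quad:
  fixes A B C :: real
  obtains \<alpha> \<beta> where "(\<alpha>, \<beta>) \<noteq> (0, 0)" "A * \<alpha>\<^sup>2 + 2 * B * \<alpha> * \<beta> + C * \<beta>\<^sup>2 = 0"
  | "\<forall>\<alpha> \<beta>. (\<alpha>, \<beta>) \<noteq> (0, 0) \<longrightarrow> A * \<alpha>\<^sup>2 + 2 * B * \<alpha> * \<beta> + C * \<beta>\<^sup>2 > 0"
  | "\<forall>\<alpha> \<beta>. (\<alpha>, \<beta>) \<noteq> (0, 0) \<longrightarrow> A * \<alpha>\<^sup>2 + 2 * B * \<alpha> * \<beta> + C * \<beta>\<^sup>2 < 0"
proof -
  consider "A = 0" | "A \<noteq> 0" "B\<^sup>2 \<ge> A * C" | "B\<^sup>2 < A * C" by linarith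
  then show ?thesis
  proof cases
    case 1
    then show ?thesis using that(1)[of 1 0] by simp
  next
    case 2
    define r where "r = sqrt (B\<^sup>2 - A * C)"
    have r2: "r\<^sup>2 = B\<^sup>2 - A * C" using 2 by (simp add: r_def)
    define \<alpha> where "\<alpha> = (r - B) / A"
    have "A * \<alpha> = r - B" using 2 by (simp add: \<alpha>_def)
    have "A * (A * \<alpha>\<^sup>2 + 2 * B * \<alpha> * 1 + C * 1\<^sup>2) = (A * \<alpha>)\<^sup>2 + 2 * B * (A * \<alpha>) + A * C"
      by (simp add: algebra_simps power2_eq_square)
    also have "\<dots> = 0" unfolding \<open>A * \<alpha> = r - B\<close> using r2 by (simp add: algebra_simps power2_eq_square)
    finally have "A * \<alpha>\<^sup>2 + 2 * B * \<alpha> * 1 + C * 1\<^sup>2 = 0" using 2 by simp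
    then show ?thesis using that(1)[of \<alpha> 1] by simp
  next
    case 3
    have key: "A * (A * \<alpha>\<^sup>2 + 2 * B * \<alpha> * \<beta> + C * \<beta>\<^sup>2) > 0" if "(\<alpha>, \<beta>) \<noteq> (0, 0)" for \<alpha> \<beta>
    proof -
      have e: "A * (A * \<alpha>\<^sup>2 + 2 * B * \<alpha> * \<beta> + C * \<beta>\<^sup>2) = (A * \<alpha> + B * \<beta>)\<^sup>2 + (A * C - B\<^sup>2) * \<beta>\<^sup>2"
        by (simp add: algebra_simps power2_eq_square)
      have A0: "A \<noteq> 0" using 3 zero_le_power2[of B] by auto
      show ?thesis
      proof (cases "\<beta> = 0")
        case True
        then have "\<alpha> \<noteq> 0" using that by simp
        then show ?thesis unfolding e using True A0 by simp
      next
        case False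
        then have "(A * C - B\<^sup>2) * \<beta>\<^sup>2 > 0" using 3 by simp
        then show ?thesis unfolding e by (smt (verit) zero_le_power2)
      qed
    qed
    have A0: "A \<noteq> 0"
    proof
      assume "A = 0"
      then have "B\<^sup>2 < 0" using 3 by simp
      then show False using zero_le_power2[of B] by linarith
    qed
    show ?thesis
    proof (cases "A > 0")
      case True
      have "\<forall>\<alpha> \<beta>. (\<alpha>, \<beta>) \<noteq> (0, 0) \<longrightarrow> A * \<alpha>\<^sup>2 + 2 * B * \<alpha> * \<beta> + C * \<beta>\<^sup>2 > 0"
        using key True by (simp add: zero_less_mult_iff)
      then show ?thesis by (rule that(2))
    next
      case False
      then have "A < 0" using A0 by linarith
      then have "\<forall>\<alpha> \<beta>. (\<alpha>, \<beta>) \<noteq> (0, 0) \<longrightarrow> A * \<alpha>\<^sup>2 + 2 * B * \<alpha> * \<beta> + C * \<beta>\<^sup>2 < 0"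
        using key by (simp add: zero_less_mult_iff)
      then show ?thesis by (rule that(3))
    qed
  qed
qed

lemma gram:
  fixes p11 p12 p22 q11 q12 q22 :: real
  assumes p: "p11 \<ge> 0" "p22 \<ge> 0" "p12\<^sup>2 \<le> p11 * p22"
  and pos: "\<forall>\<alpha> \<beta>. (\<alpha>, \<beta>) \<noteq> (0, 0) \<longrightarrow> (q11 - p11) * \<alpha>\<^sup>2 + 2 * (q12 - p12) * \<alpha> * \<beta> + (q22 - p22) * \<beta>\<^sup>2 > 0"
  shows "p11 * p22 - p12\<^sup>2 < q11 * q22 - q12\<^sup>2"
proof -
  define r11 r12 r22 where "r11 = q11 - p11" "r12 = q12 - p12" "r22 = q22 - p22"
  have pos': "(\<alpha>, \<beta>) \<noteq> (0, 0) \<Longrightarrow> r11 * \<alpha>\<^sup>2 + 2 * r12 * \<alpha> * \<beta> + r22 * \<beta>\<^sup>2 > 0" for \<alpha> \<beta>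
    using pos unfolding r11_r12_r22_def by blast
  have r11: "r11 > 0" using pos'[of 1 0] by simp
  have r22: "r22 > 0" using pos'[of 0 1] by simp
  have "r11 * (r11 * r22 - r12\<^sup>2) = r11 * (- r12)\<^sup>2 + 2 * r12 * (- r12) * r11 + r22 * r11\<^sup>2"
    by (simp add: algebra_simps power2_eq_square)
  also have "\<dots> > 0" using pos'[of "- r12" r11] r11 by simp
  finally have dR: "r11 * r22 - r12\<^sup>2 > 0" using r11 by (simp add: zero_less_mult_iff)
  define m where "m = p11 * r22 + p22 * r11"
  have m0: "m \<ge> 0" using p r11 r22 by (simp add: m_def)
  have "m\<^sup>2 \<ge> 4 * (p11 * p22) * (r11 * r22)"
  proof -
    have "m\<^sup>2 - 4 * (p11 * p22) * (r11 * r22) = (p11 * r22 - p22 * r11)\<^sup>2"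
      by (simp add: m_def algebra_simps power2_eq_square)
    then show ?thesis by (smt (verit) zero_le_power2)
  qed
  moreover have "4 * (p11 * p22) * (r11 * r22) \<ge> 4 * p12\<^sup>2 * r12\<^sup>2"
  proof -
    have "p12\<^sup>2 * r12\<^sup>2 \<le> (p11 * p22) * (r11 * r22)"
      using p dR by (intro mult_mono) auto
    then show ?thesis by simp
  qed
  ultimately have "(2 * p12 * r12)\<^sup>2 \<le> m\<^sup>2" by (simp add: power_mult_distrib)
  then have mm: "2 * p12 * r12 \<le> m" using m0 power2_le_imp_le by blast
  have "q11 * q22 - q12\<^sup>2 = (p11 * p22 - p12\<^sup>2) + (r11 * r22 - r12\<^sup>2) + (m - 2 * p12 * r12)"
    unfolding m_def r11_r12_r22_def by (simp add: algebra_simps power2_eq_square)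
  then show ?thesis using dR mm by linarith
qed

lemma indep2_coeffs:
  fixes x1 x2 :: "'a::real_vector"
  assumes "independent {x1, x2}" "x1 \<noteq> x2" "\<alpha> *\<^sub>R x1 + \<beta> *\<^sub>R x2 = 0"
  shows "\<alpha> = 0 \<and> \<beta> = 0"
proof -
  have n: "x1 \<notin> span {x2}" "x2 \<noteq> 0" using assms(1,2) by (auto simp: independent_insert)
  show ?thesis
  proof (cases "\<alpha> = 0")
    case True
    then show ?thesis using assms(3) n(2) by simp
  next
    case False
    have h: "\<alpha> *\<^sub>R x1 = - (\<beta> *\<^sub>R x2)" using assms(3) by (simp add: eq_neg_iff_add_eq_0)
    have "x1 = (1 / \<alpha>) *\<^sub>R (\<alpha> *\<^sub>R x1)" using False by simp
    also have "\<dots> = (- \<beta> / \<alpha>) *\<^sub>R x2" unfolding h by simp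
    finally have "x1 = (- \<beta> / \<alpha>) *\<^sub>R x2" .
    then have "x1 \<in> span {x2}" by (simp only:) (intro span_scale span_base, simp)
    then show ?thesis using n by simp
  qed
qed

context sympK begin

lemma Gexp2: "G (c *\<^sub>R x - g *\<^sub>R y - d *\<^sub>R w) (c *\<^sub>R x - g *\<^sub>R y - d *\<^sub>R w) =
  c * c * G x x - c * g * G x y - c * d * G x w - g * c * G y x + g * g * G y y + g * d * G y w - d * c * G w x + d * g * G w y + d * d * G w w"
  by (simp add: algebra_simps)

lemma Gexp: "G (x - g *\<^sub>R y - d *\<^sub>R w) (x - g *\<^sub>R y - d *\<^sub>R w) =
  G x x - g * G x y - d * G x w - g * G y x + g * g * G y y + g * d * G y w - d * G w x + d * g * G w y + d * d * G w w"
  by (simp add: algebra_simps)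

definition sc where "sc x = \<omega> x f"
definition tc where "tc x = - \<omega> x e"
definition qc where "qc x = x - sc x *\<^sub>R e - tc x *\<^sub>R f"

lemma qcC: "qc x \<in> C"
  unfolding C_def qc_def sc_def tc_def using ef fe antisym[of e x] antisym[of f x] by simp

lemma decomp: "x = sc x *\<^sub>R e + tc x *\<^sub>R f + qc x" by (simp add: qc_def)

lemma sc_lin: "sc (\<alpha> *\<^sub>R x + \<beta> *\<^sub>R y) = \<alpha> * sc x + \<beta> * sc y" by (simp add: sc_def)
lemma tc_lin: "tc (\<alpha> *\<^sub>R x + \<beta> *\<^sub>R y) = \<alpha> * tc x + \<beta> * tc y" by (simp add: tc_def algebra_simps)
lemma qc_lin: "qc (\<alpha> *\<^sub>R x + \<beta> *\<^sub>R y) = \<alpha> *\<^sub>R qc x + \<beta> *\<^sub>R qc y"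
  by (simp add: qc_def sc_lin tc_lin algebra_simps)

lemma om_qc: "u \<in> C \<Longrightarrow> \<omega> (qc x) u = \<omega> x u"
  using Cfacts[of u] by (simp add: qc_def)

lemma xa: "u \<in> C \<Longrightarrow> \<omega> x (a u) = \<omega> (qc x) u - tc x"
  by (simp add: om_qc a_def tc_def)

lemma xb: "u \<in> C \<Longrightarrow> \<omega> x (b u) = sc x - G (qc x) u"
  using om_qc[OF KC, of u x] by (simp add: b_def sc_def oK)

lemma oq: "\<omega> (qc x) (qc y) = \<omega> x y - (sc x * tc y - tc x * sc y)"
  unfolding qc_def sc_def tc_def using ef fe antisym[of e y] antisym[of f y]
  by (simp add: algebra_simps)

lemma qc0: "qc x = 0 \<Longrightarrow> sc x = 0 \<Longrightarrow> tc x = 0 \<Longrightarrow> x = 0"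
  using decomp[of x] by simp

lemma exists_w:
  assumes "dim C \<ge> 3" "qq \<in> C"
  shows "\<exists>w\<in>C. w \<noteq> 0 \<and> G w qq = 0 \<and> G w (K qq) = 0"
proof (rule ccontr)
  assume na: "\<not> ?thesis"
  define L where "L w = (G w qq, G w (K qq))" for w
  have linL: "linear L" by (rule linearI) (simp_all add: L_def algebra_simps)
  have "inj_on L C"
  proof (rule inj_onI)
    fix w1 w2 assume w: "w1 \<in> C" "w2 \<in> C" "L w1 = L w2"
    have "w1 - w2 \<in> C" using w subC subspace_diff by blast
    moreover have "G (w1 - w2) qq = 0" "G (w1 - w2) (K qq) = 0" using w(3) by (simp_all add: L_def)
    ultimately show "w1 = w2" using na by auto
  qed
  moreover have sC: "span C = C" using subC by simp
  ultimately have "inj_on L (span C)" by (metis sC)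
  then have "dim (L ` C) = dim C" by (rule dim_image_eq[OF linL])
  moreover have "dim (L ` C) \<le> 2" using dim_subset_UNIV[of "L ` C"] by simp
  ultimately show False using assms(1) by simp
qed

lemma solve:
  assumes qq: "qq \<in> C" "G qq qq > 0" and st: "s\<^sup>2 + t\<^sup>2 \<le> G qq qq"
  and alt: "s\<^sup>2 + t\<^sup>2 = G qq qq \<or> dim C \<ge> 3"
  shows "\<exists>u\<in>S. \<omega> qq u = t \<and> G qq u = s"
proof -
  define N where "N = G qq qq"
  define kq where "kq = K qq"
  have kq: "kq \<in> C" using KC qq(1) by (simp add: kq_def)
  have f1: "G qq kq = 0" "G kq qq = 0" "G kq kq = N" "\<omega> qq kq = - N"
    using GselfK[OF qq(1)] Gsym[OF qq(1) kq] GKK[OF qq(1) qq(1)] by (simp_all add: kq_def N_def oK)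
  have N0: "N > 0" using qq by (simp add: N_def)
  define u0 where "u0 = (s / N) *\<^sub>R qq - (t / N) *\<^sub>R kq"
  have u0C: "u0 \<in> C" unfolding u0_def using qq(1) kq subC
    by (intro subspace_diff subspace_scale) auto
  have o1: "\<omega> qq u0 = t" using N0 f1 by (simp add: u0_def)
  have g1: "G qq u0 = s" using N0 f1 by (simp add: u0_def N_def)
  have g2: "G u0 u0 = (s\<^sup>2 + t\<^sup>2) / N" using N0 f1
    by (simp add: u0_def N_def power2_eq_square field_simps)
  show ?thesis
  proof (cases "s\<^sup>2 + t\<^sup>2 = N")
    case True
    then show ?thesis using u0C g2 o1 g1 N0 by (intro bexI[of _ u0]) (auto simp: S_def)
  next
    case False
    then have dC: "dim C \<ge> 3" using alt by (simp add: N_def)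
    obtain w where w: "w \<in> C" "w \<noteq> 0" "G w qq = 0" "G w kq = 0"
      using exists_w[OF dC qq(1)] by (auto simp: kq_def)
    define w' where "w' = (1 / sqrt (G w w)) *\<^sub>R w"
    have Gw: "G w w > 0" using Gpos w by auto
    have w'C: "w' \<in> C" using w subC by (simp add: w'_def subspace_scale)
    have w'1: "G w' w' = 1" using Gw by (simp add: w'_def power2_eq_square[symmetric])
    have w'2: "G w' qq = 0" "G w' kq = 0" using w by (simp_all add: w'_def)
    have w'3: "G qq w' = 0" "G kq w' = 0" using Gsym[OF w'C qq(1)] Gsym[OF w'C kq] w'2 by simp_all
    have w'4: "\<omega> qq w' = 0"
    proof -
      have "G w' (K qq) = \<omega> w' qq" by (rule GK[OF qq(1)])
      then show ?thesis using w'2 antisym[of qq w'] by (simp add: kq_def)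
    qed
    have w'5: "G u0 w' = 0" "G w' u0 = 0" using w'3 w'2 by (simp_all add: u0_def)
    have lt: "(s\<^sup>2 + t\<^sup>2) / N < 1" using False st N0 by (simp add: N_def)
    define r where "r = sqrt (1 - (s\<^sup>2 + t\<^sup>2) / N)"
    have r2: "r * r = 1 - (s\<^sup>2 + t\<^sup>2) / N" using lt by (simp add: r_def)
    define u where "u = u0 + r *\<^sub>R w'"
    have uC: "u \<in> C" using u0C w'C subC by (simp add: u_def subspace_add subspace_scale)
    have "G u u = 1" using g2 w'1 w'5 r2 by (simp add: u_def)
    moreover have "\<omega> qq u = t" "G qq u = s" using o1 g1 w'3 w'4 by (simp_all add: u_def)
    ultimately show ?thesis using uC by (intro bexI[of _ u]) (auto simp: S_def)
  qed
qed

lemma CS: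
  assumes "q1 \<in> C" "q2 \<in> C"
  shows "(\<omega> q1 q2)\<^sup>2 + (G q1 q2)\<^sup>2 \<le> G q1 q1 * G q2 q2"
    and "dim C = 2 \<Longrightarrow> (\<omega> q1 q2)\<^sup>2 + (G q1 q2)\<^sup>2 = G q1 q1 * G q2 q2"
proof -
  have main: "(\<omega> q1 q2)\<^sup>2 + (G q1 q2)\<^sup>2 \<le> G q1 q1 * G q2 q2 \<and>
     (dim C = 2 \<longrightarrow> (\<omega> q1 q2)\<^sup>2 + (G q1 q2)\<^sup>2 = G q1 q1 * G q2 q2)"
  proof (cases "q2 = 0")
    case True
    then show ?thesis by simp
  next
    case False
    define N2 where "N2 = G q2 q2"
    have N2: "N2 > 0" using Gpos assms(2) False by (simp add: N2_def)
    define k2 where "k2 = K q2"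
    have k2: "k2 \<in> C" using KC assms(2) by (simp add: k2_def)
    define W where "W = \<omega> q1 q2"
    define g12 where "g12 = G q1 q2"
    have f: "G q1 k2 = W" "G k2 q1 = W" "G q2 q1 = g12" "G q2 k2 = 0" "G k2 q2 = 0" "G k2 k2 = N2"
      using GK[OF assms(2), of q1] Gsym[OF assms(1) k2] Gsym[OF assms] GselfK[OF assms(2)]
        Gsym[OF assms(2) k2] GKK[OF assms(2) assms(2)]
      by (simp_all add: k2_def W_def g12_def N2_def)
    have f7: "G q1 q2 = g12" by (simp add: g12_def)
    define z where "z = N2 *\<^sub>R q1 - g12 *\<^sub>R q2 - W *\<^sub>R k2"
    have zC: "z \<in> C" unfolding z_def using assms k2 subC by (intro subspace_diff subspace_scale) auto
    have f8: "G q2 q2 = N2" by (simp add: N2_def)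
    have "G z z = N2 * N2 * G q1 q1 - N2 * g12 * G q1 q2 - N2 * W * G q1 k2 - g12 * N2 * G q2 q1
       + g12 * g12 * G q2 q2 + g12 * W * G q2 k2 - W * N2 * G k2 q1
       + W * g12 * G k2 q2 + W * W * G k2 k2"
      unfolding z_def by (rule Gexp2)
    also have "\<dots> = N2 * (G q1 q1 * N2 - g12\<^sup>2 - W\<^sup>2)"
      unfolding f f7 f8 by (simp add: algebra_simps power2_eq_square)
    finally have Gzz: "G z z = N2 * (G q1 q1 * N2 - g12\<^sup>2 - W\<^sup>2)" .
    moreover have "G z z \<ge> 0" using Gnn[OF zC] .
    ultimately have ineq: "W\<^sup>2 + g12\<^sup>2 \<le> G q1 q1 * N2"
      using N2 Gzz by (simp add: zero_le_mult_iff)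
    have eqc: "W\<^sup>2 + g12\<^sup>2 = G q1 q1 * N2" if d2: "dim C = 2"
    proof -
      have zq: "G z q2 = 0" "G z k2 = 0" using f f7 f8 by (simp_all add: z_def)
      have ind: "\<alpha> *\<^sub>R q2 + \<beta> *\<^sub>R k2 = 0 \<Longrightarrow> \<alpha> = 0 \<and> \<beta> = 0" for \<alpha> \<beta>
      proof -
        assume h: "\<alpha> *\<^sub>R q2 + \<beta> *\<^sub>R k2 = 0"
        have "G (\<alpha> *\<^sub>R q2 + \<beta> *\<^sub>R k2) q2 = 0" "G (\<alpha> *\<^sub>R q2 + \<beta> *\<^sub>R k2) k2 = 0" using h by simp_all
        then show ?thesis using f N2 by (simp add: N2_def)
      qed
      have "independent {q2, k2}" "q2 \<noteq> k2" using indep2[of q2 k2] ind by blast+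
      moreover have "{q2, k2} \<subseteq> C" using assms k2 by auto
      ultimately have "C \<subseteq> span {q2, k2}" using card_eq_dim[of "{q2, k2}" C] d2 by simp
      then obtain \<gamma> \<delta> where "z = \<gamma> *\<^sub>R q2 + \<delta> *\<^sub>R k2" using zC unfolding span2 by blast
      then have "G z z = 0" using zq by simp
      then show ?thesis using Gzz N2 by simp
    qed
    show ?thesis using ineq eqc by (simp add: W_def g12_def N2_def)
  qed
  then show "(\<omega> q1 q2)\<^sup>2 + (G q1 q2)\<^sup>2 \<le> G q1 q1 * G q2 q2"
    and "dim C = 2 \<Longrightarrow> (\<omega> q1 q2)\<^sup>2 + (G q1 q2)\<^sup>2 = G q1 q1 * G q2 q2" by auto
qed

end

context sympK begin

lemma nonanti:
  assumes "x \<in> X" "x \<noteq> 0" "\<omega> x (a u) = 0" "\<omega> x (b u) = 0"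
  shows "\<not> iso_antipodal \<omega> X (Y u)"
proof -
  have "x \<in> X \<inter> symp_orth \<omega> (Y u)" using assms by (simp add: in_symp_orth)
  then show ?thesis using assms(2) unfolding iso_antipodal_def dsum_univ_def by blast
qed

lemma found:
  assumes x: "x \<in> X" "x \<noteq> 0"
  and h: "G (qc x) (qc x) = (sc x)\<^sup>2 + (tc x)\<^sup>2 \<or> (G (qc x) (qc x) > (sc x)\<^sup>2 + (tc x)\<^sup>2 \<and> dim C \<ge> 3)"
  shows "\<exists>u\<in>S. \<not> iso_antipodal \<omega> X (Y u)"
proof -
  have q0: "qc x \<noteq> 0"
  proof
    assume q: "qc x = 0"
    then have "(sc x)\<^sup>2 + (tc x)\<^sup>2 = 0" using h by (smt (verit) Gl0 zero_le_power2)
    then have "sc x = 0" "tc x = 0" by (simp_all add: sum_power2_eq_zero_iff)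
    then show False using qc0 q x(2) by blast
  qed
  have pos: "G (qc x) (qc x) > 0" using Gpos[OF qcC q0] .
  have "(sc x)\<^sup>2 + (tc x)\<^sup>2 \<le> G (qc x) (qc x)" using h by auto
  moreover have "(sc x)\<^sup>2 + (tc x)\<^sup>2 = G (qc x) (qc x) \<or> dim C \<ge> 3" using h by auto
  ultimately obtain u where u: "u \<in> S" "\<omega> (qc x) u = tc x" "G (qc x) u = sc x"
    using solve[OF qcC pos] by blast
  have uC: "u \<in> C" using u(1) S_sub by blast
  have "\<omega> x (a u) = 0" "\<omega> x (b u) = 0" using xa[OF uC, of x] xb[OF uC, of x] u by simp_all
  then show ?thesis using nonanti[OF x] u(1) by blast
qed

lemma maximal:
  assumes X: "X \<in> iso2 \<omega>" and dC: "dim C \<ge> 2"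
  shows "\<exists>u\<in>S. \<not> iso_antipodal \<omega> X (Y u)"
proof -
  have Xs: "subspace X" "dim X = 2" "\<And>x y. x \<in> X \<Longrightarrow> y \<in> X \<Longrightarrow> \<omega> x y = 0"
    using X by (auto simp: iso2_def)
  obtain B where B: "B \<subseteq> X" "independent B" "X \<subseteq> span B" "card B = dim X"
    using basis_exists by blast
  then obtain x1 x2 where x12: "B = {x1, x2}" "x1 \<noteq> x2" using Xs(2) by (auto simp: card_2_iff)
  have xX: "x1 \<in> X" "x2 \<in> X" using B(1) x12 by auto
  have ind: "\<alpha> *\<^sub>R x1 + \<beta> *\<^sub>R x2 = 0 \<Longrightarrow> \<alpha> = 0 \<and> \<beta> = 0" for \<alpha> \<beta>
    using indep2_coeffs[of x1 x2 \<alpha> \<beta>] B(2) x12 by simp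
  have comb: "\<alpha> *\<^sub>R x1 + \<beta> *\<^sub>R x2 \<in> X" for \<alpha> \<beta>
    using Xs(1) xX by (intro subspace_add subspace_scale) auto
  define q1 q2 s1 s2 t1 t2 where "q1 = qc x1" "q2 = qc x2" "s1 = sc x1" "s2 = sc x2" "t1 = tc x1" "t2 = tc x2"
  have qC: "q1 \<in> C" "q2 \<in> C" using qcC by (simp_all add: q1_q2_s1_s2_t1_t2_def)
  define A where "A = G q1 q1 - s1\<^sup>2 - t1\<^sup>2"
  define Bc where "Bc = G q1 q2 - s1 * s2 - t1 * t2"
  define Cc where "Cc = G q2 q2 - s2\<^sup>2 - t2\<^sup>2"
  have hexp: "G (qc (\<alpha> *\<^sub>R x1 + \<beta> *\<^sub>R x2)) (qc (\<alpha> *\<^sub>R x1 + \<beta> *\<^sub>R x2))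
      - (sc (\<alpha> *\<^sub>R x1 + \<beta> *\<^sub>R x2))\<^sup>2 - (tc (\<alpha> *\<^sub>R x1 + \<beta> *\<^sub>R x2))\<^sup>2
      = A * \<alpha>\<^sup>2 + 2 * Bc * \<alpha> * \<beta> + Cc * \<beta>\<^sup>2" for \<alpha> \<beta>
  proof -
    have "G q2 q1 = G q1 q2" using Gsym qC by metis
    then show ?thesis unfolding qc_lin sc_lin tc_lin q1_q2_s1_s2_t1_t2_def[symmetric] A_def Bc_def Cc_def
      by (simp add: algebra_simps power2_eq_square)
  qed
  have D: "\<omega> q1 q2 = - (s1 * t2 - t1 * s2)"
    using oq[of x1 x2] Xs(3)[OF xX] by (simp add: q1_q2_s1_s2_t1_t2_def)
  have lag: "(s1\<^sup>2 + t1\<^sup>2) * (s2\<^sup>2 + t2\<^sup>2) - (s1 * s2 + t1 * t2)\<^sup>2 = (s1 * t2 - t1 * s2)\<^sup>2"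
    by (simp add: algebra_simps power2_eq_square)
  note cs = CS[OF qC]
  consider \<alpha> \<beta> where "(\<alpha>, \<beta>) \<noteq> (0, 0)" "A * \<alpha>\<^sup>2 + 2 * Bc * \<alpha> * \<beta> + Cc * \<beta>\<^sup>2 = 0"
    | "\<forall>\<alpha> \<beta>. (\<alpha>, \<beta>) \<noteq> (0, 0) \<longrightarrow> A * \<alpha>\<^sup>2 + 2 * Bc * \<alpha> * \<beta> + Cc * \<beta>\<^sup>2 > 0"
    | "\<forall>\<alpha> \<beta>. (\<alpha>, \<beta>) \<noteq> (0, 0) \<longrightarrow> A * \<alpha>\<^sup>2 + 2 * Bc * \<alpha> * \<beta> + Cc * \<beta>\<^sup>2 < 0"
    using quad by blast
  then show ?thesis
  proof cases
    case 1
    define x where "x = \<alpha> *\<^sub>R x1 + \<beta> *\<^sub>R x2"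
    have "x \<noteq> 0" using ind 1(1) by (auto simp: x_def)
    moreover have "G (qc x) (qc x) = (sc x)\<^sup>2 + (tc x)\<^sup>2" using hexp[of \<alpha> \<beta>] 1(2) by (simp add: x_def)
    ultimately show ?thesis using found[OF comb[of \<alpha> \<beta>]] by (simp add: x_def)
  next
    case 2
    show ?thesis
    proof (cases "dim C \<ge> 3")
      case True
      have "x1 \<noteq> 0"
      proof
        assume "x1 = 0"
        then show False using ind[of 1 0] by simp
      qed
      moreover have "G (qc x1) (qc x1) > (sc x1)\<^sup>2 + (tc x1)\<^sup>2"
      proof -
        have "A * 1\<^sup>2 + 2 * Bc * 1 * 0 + Cc * 0\<^sup>2 > 0" using 2[rule_format, of 1 0] by simp
        then show ?thesis by (simp add: q1_q2_s1_s2_t1_t2_def A_def)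
      qed
      ultimately show ?thesis using found[OF xX(1)] True by blast
    next
      case False
      then have d2: "dim C = 2" using dC by simp
      have "(s1\<^sup>2 + t1\<^sup>2) * (s2\<^sup>2 + t2\<^sup>2) - (s1 * s2 + t1 * t2)\<^sup>2 < G q1 q1 * G q2 q2 - (G q1 q2)\<^sup>2"
      proof (rule gram)
        show "(s1 * s2 + t1 * t2)\<^sup>2 \<le> (s1\<^sup>2 + t1\<^sup>2) * (s2\<^sup>2 + t2\<^sup>2)" using lag by (smt (verit) zero_le_power2)
        show "\<forall>\<alpha> \<beta>. (\<alpha>, \<beta>) \<noteq> (0, 0) \<longrightarrow> (G q1 q1 - (s1\<^sup>2 + t1\<^sup>2)) * \<alpha>\<^sup>2 + 2 * (G q1 q2 - (s1 * s2 + t1 * t2)) * \<alpha> * \<beta> + (G q2 q2 - (s2\<^sup>2 + t2\<^sup>2)) * \<beta>\<^sup>2 > 0"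
          using 2 by (simp add: A_def Bc_def Cc_def algebra_simps)
      qed simp_all
      moreover have "G q1 q1 * G q2 q2 - (G q1 q2)\<^sup>2 = (\<omega> q1 q2)\<^sup>2" using cs(2)[OF d2] by simp
      moreover have "(\<omega> q1 q2)\<^sup>2 = (s1 * t2 - t1 * s2)\<^sup>2" unfolding D by (simp add: power2_commute)
      ultimately have False using lag by linarith
      then show ?thesis ..
    qed
  next
    case 3
    have "G q1 q1 * G q2 q2 - (G q1 q2)\<^sup>2 < (s1\<^sup>2 + t1\<^sup>2) * (s2\<^sup>2 + t2\<^sup>2) - (s1 * s2 + t1 * t2)\<^sup>2"
    proof (rule gram)
      show "G q1 q1 \<ge> 0" "G q2 q2 \<ge> 0" using Gnn qC by auto
      show "(G q1 q2)\<^sup>2 \<le> G q1 q1 * G q2 q2" using cs(1) by (smt (verit) zero_le_power2)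
      show "\<forall>\<alpha> \<beta>. (\<alpha>, \<beta>) \<noteq> (0, 0) \<longrightarrow> ((s1\<^sup>2 + t1\<^sup>2) - G q1 q1) * \<alpha>\<^sup>2 + 2 * ((s1 * s2 + t1 * t2) - G q1 q2) * \<alpha> * \<beta> + ((s2\<^sup>2 + t2\<^sup>2) - G q2 q2) * \<beta>\<^sup>2 > 0"
      proof (intro allI impI)
        fix \<alpha> \<beta> :: real assume "(\<alpha>, \<beta>) \<noteq> (0, 0)"
        then have "A * \<alpha>\<^sup>2 + 2 * Bc * \<alpha> * \<beta> + Cc * \<beta>\<^sup>2 < 0" using 3 by simp
        then show "((s1\<^sup>2 + t1\<^sup>2) - G q1 q1) * \<alpha>\<^sup>2 + 2 * ((s1 * s2 + t1 * t2) - G q1 q2) * \<alpha> * \<beta> + ((s2\<^sup>2 + t2\<^sup>2) - G q2 q2) * \<beta>\<^sup>2 > 0"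
          by (simp add: A_def Bc_def Cc_def algebra_simps)
      qed
    qed
    moreover have "(\<omega> q1 q2)\<^sup>2 = (s1 * t2 - t1 * s2)\<^sup>2" unfolding D by (simp add: power2_commute)
    ultimately have False using lag cs(1) by linarith
    then show ?thesis ..
  qed
qed

end

lemma closest_point_subspace_char:
  fixes V :: "'a::euclidean_space set"
  assumes V: "subspace V" and p: "p \<in> V" and orth: "\<And>z. z \<in> V \<Longrightarrow> inner (x - p) z = 0"
  shows "closest_point V x = p"
proof -
  have "dist x p \<le> dist x z" if z: "z \<in> V" for z
  proof -
    have pz: "p - z \<in> V" using V p z subspace_diff by blast
    have e: "x - z = (x - p) + (p - z)" by simp
    have "(norm ((x - p) + (p - z)))\<^sup>2 = (norm (x - p))\<^sup>2 + (norm (p - z))\<^sup>2"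
      using orth[OF pz] by (intro norm_add_Pythagorean) (simp add: orthogonal_def)
    then have "(norm (x - z))\<^sup>2 = (norm (x - p))\<^sup>2 + (norm (p - z))\<^sup>2" unfolding e[symmetric] .
    then have "(norm (x - p))\<^sup>2 \<le> (norm (x - z))\<^sup>2" by simp
    then have "norm (x - p) \<le> norm (x - z)" by (rule power2_le_imp_le) simp
    then show ?thesis by (simp add: dist_norm)
  qed
  then show ?thesis
    using closest_point_unique[OF subspace_imp_convex[OF V] closed_subspace[OF V] p] by auto
qed

definition gdet :: "'a::real_inner \<Rightarrow> 'a \<Rightarrow> real" where
  "gdet a b = inner a a * inner b b - (inner a b)\<^sup>2"

definition gproj :: "'a::real_inner \<Rightarrow> 'a \<Rightarrow> 'a \<Rightarrow> 'a" where
  "gproj a b x = ((inner x a * inner b b - inner x b * inner a b) / gdet a b) *\<^sub>R a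
     + ((inner x b * inner a a - inner x a * inner a b) / gdet a b) *\<^sub>R b"

lemma gdet_pos:
  fixes a b :: "'a::real_inner"
  assumes "\<And>\<alpha> \<beta>. \<alpha> *\<^sub>R a + \<beta> *\<^sub>R b = 0 \<Longrightarrow> \<alpha> = 0 \<and> \<beta> = 0"
  shows "gdet a b > 0"
proof -
  have a0: "a \<noteq> 0" using assms[of 1 0] by auto
  then have aa: "inner a a > 0" by simp
  define z where "z = b - (inner a b / inner a a) *\<^sub>R a"
  have "z \<noteq> 0"
  proof
    assume "z = 0"
    then have h: "(- (inner a b / inner a a)) *\<^sub>R a + 1 *\<^sub>R b = 0" by (simp add: z_def)
    show False using assms[OF h] by simp
  qed
  then have zz: "inner z z > 0" by simp
  have "inner a a * inner z z = gdet a b"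
    using aa unfolding z_def gdet_def
    by (simp add: inner_diff_left inner_diff_right inner_commute field_simps power2_eq_square)
  then show ?thesis using aa zz by (metis mult_pos_pos)
qed

lemma gproj_orth:
  fixes a b :: "'a::real_inner"
  assumes "gdet a b \<noteq> 0"
  shows "inner (x - gproj a b x) a = 0" "inner (x - gproj a b x) b = 0"
proof -
  define D where "D = gdet a b"
  have D: "D = inner a a * inner b b - (inner a b)\<^sup>2" by (simp add: D_def gdet_def)
  have DD: "D \<noteq> 0" using assms by (simp add: D_def)
  have "inner (gproj a b x) a = ((inner x a * inner b b - inner x b * inner a b) * inner a a
     + (inner x b * inner a a - inner x a * inner a b) * inner a b) / D"
    unfolding gproj_def D_def[symmetric] by (simp add: inner_add_left inner_add_right add_divide_distrib inner_commute mult.commute)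
  also have "\<dots> = inner x a * D / D" unfolding D by (simp add: algebra_simps power2_eq_square)
  also have "\<dots> = inner x a" using DD by simp
  finally show "inner (x - gproj a b x) a = 0" by (simp add: inner_diff_left)
  have "inner (gproj a b x) b = ((inner x a * inner b b - inner x b * inner a b) * inner a b
     + (inner x b * inner a a - inner x a * inner a b) * inner b b) / D"
    unfolding gproj_def D_def[symmetric] by (simp add: inner_add_left inner_add_right add_divide_distrib inner_commute mult.commute)
  also have "\<dots> = inner x b * D / D" unfolding D by (simp add: algebra_simps power2_eq_square)
  also have "\<dots> = inner x b" using DD by simp
  finally show "inner (x - gproj a b x) b = 0" by (simp add: inner_diff_left)
qed

lemma closest_point_span2:
  fixes a b x :: "'a::euclidean_space"
  assumes "\<And>\<alpha> \<beta>. \<alpha> *\<^sub>R a + \<beta> *\<^sub>R b = 0 \<Longrightarrow> \<alpha> = 0 \<and> \<beta> = 0"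
  shows "closest_point (span {a, b}) x = gproj a b x"
proof (rule closest_point_subspace_char)
  have "gdet a b > 0" by (rule gdet_pos) (rule assms)
  then have D: "gdet a b \<noteq> 0" by simp
  show "subspace (span {a, b})" by simp
  show "gproj a b x \<in> span {a, b}" unfolding span2 gproj_def by blast
  fix z assume "z \<in> span {a, b}"
  then obtain \<alpha> \<beta> where z: "z = \<alpha> *\<^sub>R a + \<beta> *\<^sub>R b" by (auto simp: span2)
  show "inner (x - gproj a b x) z = 0" unfolding z using gproj_orth[OF D, of x]
    by (simp add: inner_add_right)
qed

lemma gproj_linear: "linear (gproj a b)"
  by (rule linearI) (simp_all add: gproj_def inner_add_left algebra_simps add_divide_distrib diff_divide_distrib)

lemma continuous_on_gproj:
  fixes A B :: "'b::topological_space \<Rightarrow> 'a::euclidean_space"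
  assumes "continuous_on S A" "continuous_on S B" "\<And>w. w \<in> S \<Longrightarrow> gdet (A w) (B w) \<noteq> 0"
  shows "continuous_on S (\<lambda>w. gproj (A w) (B w) x)"
  unfolding gproj_def gdet_def using assms(3)[unfolded gdet_def]
  by (intro continuous_intros assms(1,2)) auto

lemma continuous_on_matrix:
  fixes h :: "'b::topological_space \<Rightarrow> real^'n \<Rightarrow> real^'m"
  assumes "\<And>x. continuous_on S (\<lambda>w. h w x)"
  shows "continuous_on S (\<lambda>w. matrix (h w))"
  unfolding matrix_def by (intro continuous_intros assms)

lemma matrix_inj_linear:
  fixes f g :: "real^'n \<Rightarrow> real^'m"
  assumes "linear f" "linear g" "matrix f = matrix g"
  shows "f = g"
proof (rule linear_eq_stdbasis[OF assms(1,2)])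
  fix v :: "real^'n" assume "v \<in> Basis"
  then obtain i where v: "v = axis i 1" by (auto simp: Basis_vec_def)
  have "\<And>j. matrix f $ j $ i = matrix g $ j $ i" using assms(3) by simp
  then show "f v = g v" unfolding v by (simp add: matrix_def vec_eq_iff)
qed

context sympK begin

lemma cpY: "u \<in> C \<Longrightarrow> closest_point (Y u) = gproj (a u) (b u)"
  unfolding Y_def by (rule ext, rule closest_point_span2, rule ab_indep) auto

lemma gdetY: "u \<in> C \<Longrightarrow> gdet (a u) (b u) \<noteq> 0"
  using gdet_pos[of "a u" "b u"] ab_indep by fastforce

definition nrm where "nrm w = (1 / sqrt (G w w)) *\<^sub>R w"

lemma contG: "continuous_on M (\<lambda>w. G w w)"
proof -
  have "continuous_on M (\<lambda>w. \<omega> w (K w))"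
    by (rule bilinear_continuous_on_compose[OF continuous_on_id _ bil])
       (rule linear_continuous_on, rule linear_conv_bounded_linear[THEN iffD1, OF Klin])
  then show ?thesis unfolding G_def by (intro continuous_intros)
qed

lemma homeo:
  "(proj_mat ` (Y ` S)) homeomorphic (sphere 0 1 \<inter> C)"
proof -
  define T where "T = sphere (0::real^'n) 1 \<inter> C"
  have Gpos_T: "G w w > 0" if "w \<in> T" for w
  proof -
    have w: "w \<in> C" "norm w = 1" using that by (auto simp: T_def)
    then have "w \<noteq> 0" by auto
    then show ?thesis using Gpos w(1) by blast
  qed
  have nrmC: "nrm w \<in> C" if "w \<in> T" for w using that subC by (auto simp: T_def nrm_def subspace_scale)
  have nrmS: "nrm w \<in> S" if "w \<in> T" for w
  proof -
    have "G (nrm w) (nrm w) = G w w / (sqrt (G w w))\<^sup>2" by (simp add: nrm_def power2_eq_square)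
    also have "\<dots> = 1" using Gpos_T[OF that] by simp
    finally show ?thesis using nrmC[OF that] by (simp add: S_def)
  qed
  define F where "F w = proj_mat (Y (nrm w))" for w
  have F_eq: "F w = matrix (gproj (a (nrm w)) (b (nrm w)))" if "w \<in> T" for w
    unfolding F_def proj_mat_def using cpY[OF nrmC[OF that]] by simp
  have cont_nrm: "continuous_on T nrm"
  proof -
    have cG: "continuous_on T (\<lambda>w. G w w)" by (rule contG)
    have "\<forall>w\<in>T. sqrt (G w w) \<noteq> 0" using Gpos_T by force
    then show ?thesis unfolding nrm_def
      by (intro continuous_intros cG) auto
  qed
  have cont_a: "continuous_on T (\<lambda>w. a (nrm w))" unfolding a_def by (intro continuous_intros cont_nrm)
  have cont_b: "continuous_on T (\<lambda>w. b (nrm w))" unfolding b_def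
    by (intro continuous_intros continuous_on_compose2[OF linear_continuous_on[OF linear_conv_bounded_linear[THEN iffD1, OF Klin]] cont_nrm]) auto
  have contF: "continuous_on T F"
  proof (rule continuous_on_eq[OF _ F_eq[symmetric]])
    show "continuous_on T (\<lambda>w. matrix (gproj (a (nrm w)) (b (nrm w))))"
      by (intro continuous_on_matrix continuous_on_gproj cont_a cont_b gdetY nrmC)
  qed auto
  have injF: "inj_on F T"
  proof (rule inj_onI)
    fix w1 w2 assume w: "w1 \<in> T" "w2 \<in> T" "F w1 = F w2"
    have "gproj (a (nrm w1)) (b (nrm w1)) = gproj (a (nrm w2)) (b (nrm w2))"
      using w F_eq by (intro matrix_inj_linear gproj_linear) auto
    then have "closest_point (Y (nrm w1)) = closest_point (Y (nrm w2))"
      using cpY nrmC w by simp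
    moreover have "Y (nrm w) = {x. closest_point (Y (nrm w)) x = x}" for w
    proof -
      have "0 \<in> Y (nrm w)" by (simp add: Y_def span_zero)
      then have ne: "Y (nrm w) \<noteq> {}" by auto
      have cl: "closed (Y (nrm w))" by (simp add: Y_def closed_subspace)
      show ?thesis using closest_point_refl[OF cl ne] by auto
    qed
    ultimately have "Y (nrm w1) = Y (nrm w2)" by metis
    then have e: "nrm w1 = nrm w2" using Y_inj nrmS w by blast
    have nn: "norm (nrm w) = 1 / sqrt (G w w)" if "w \<in> T" for w
      using that Gpos_T[OF that] by (auto simp: nrm_def T_def)
    have "1 / sqrt (G w1 w1) = 1 / sqrt (G w2 w2)" using nn[OF w(1)] nn[OF w(2)] e by simp
    then have "sqrt (G w1 w1) = sqrt (G w2 w2)" by (simp add: divide_inverse)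
    then show "w1 = w2" using e Gpos_T[OF w(2)] by (simp add: nrm_def)
  qed
  have imF: "F ` T = proj_mat ` (Y ` S)"
  proof
    show "F ` T \<subseteq> proj_mat ` (Y ` S)" using nrmS by (auto simp: F_def)
    show "proj_mat ` (Y ` S) \<subseteq> F ` T"
    proof
      fix m assume "m \<in> proj_mat ` (Y ` S)"
      then obtain u where u: "u \<in> S" "m = proj_mat (Y u)" by auto
      have uC: "u \<in> C" "G u u = 1" using u by (auto simp: S_def)
      then have u0: "u \<noteq> 0" by auto
      define w where "w = (1 / norm u) *\<^sub>R u"
      have wT: "w \<in> T" using u0 uC subC by (simp add: T_def w_def subspace_scale)
      have "G w w = 1 / (norm u)\<^sup>2" using uC by (simp add: w_def power2_eq_square)
      then have "sqrt (G w w) = 1 / norm u" by (simp add: real_sqrt_divide)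
      then have "nrm w = u" using u0 by (simp add: nrm_def w_def)
      then show "m \<in> F ` T" using wT u by (auto simp: F_def)
    qed
  qed
  have cT: "compact T" unfolding T_def by (intro compact_Int_closed compact_sphere closed_subspace subC)
  have "T homeomorphic (proj_mat ` (Y ` S))" by (rule homeomorphic_compact[OF cT contF imF injF])
  then show ?thesis unfolding T_def using homeomorphic_sym by blast
qed

end

definition Am :: "real^4 \<Rightarrow> real^4" where
  "Am x = (\<chi> k. if k = 1 then x$1 else if k = 2 then x$2 else if k = 3 then - x$3 else - x$4)"
definition Bm :: "real^4 \<Rightarrow> real^4" where
  "Bm x = (\<chi> k. if k = 1 then x$3 else if k = 2 then x$4 else if k = 3 then x$1 else x$2)"
definition Cm :: "real^4 \<Rightarrow> real^4" where
  "Cm x = (\<chi> k. if k = 1 then x$4 else if k = 2 then - x$3 else if k = 3 then - x$2 else x$1)"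
definition Jm :: "real^4 \<Rightarrow> real^4" where
  "Jm x = (\<chi> k. if k = 1 then - x$2 else if k = 2 then x$1 else if k = 3 then - x$4 else x$3)"

lemma ne4: "(1::4) \<noteq> 2" "(1::4) \<noteq> 3" "(1::4) \<noteq> 4" "(2::4) \<noteq> 3" "(2::4) \<noteq> 4" "(3::4) \<noteq> 4"
  by simp_all

lemma comps:
  "Am x $ 1 = x$1" "Am x $ 2 = x$2" "Am x $ 3 = - x$3" "Am x $ 4 = - x$4"
  "Bm x $ 1 = x$3" "Bm x $ 2 = x$4" "Bm x $ 3 = x$1" "Bm x $ 4 = x$2"
  "Cm x $ 1 = x$4" "Cm x $ 2 = - x$3" "Cm x $ 3 = - x$2" "Cm x $ 4 = x$1"
  "Jm x $ 1 = - x$2" "Jm x $ 2 = x$1" "Jm x $ 3 = - x$4" "Jm x $ 4 = x$3"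
  by (simp_all add: Am_def Bm_def Cm_def Jm_def)

definition Mm :: "real^3 \<Rightarrow> real^4 \<Rightarrow> real^4" where
  "Mm u x = u$1 *\<^sub>R Am x + u$2 *\<^sub>R Bm x + u$3 *\<^sub>R Cm x"

lemma Mc:
  "Mm u x $ 1 = u$1 * x$1 + u$2 * x$3 + u$3 * x$4"
  "Mm u x $ 2 = u$1 * x$2 + u$2 * x$4 - u$3 * x$3"
  "Mm u x $ 3 = - u$1 * x$3 + u$2 * x$1 - u$3 * x$2"
  "Mm u x $ 4 = - u$1 * x$4 + u$2 * x$2 + u$3 * x$1"
  by (simp_all add: Mm_def comps)

lemma inner4: "inner (x::real^4) y = x$1 * y$1 + x$2 * y$2 + x$3 * y$3 + x$4 * y$4"
  by (simp add: inner_vec_def sum_4)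

lemma inner3: "inner (x::real^3) y = x$1 * y$1 + x$2 * y$2 + x$3 * y$3"
  by (simp add: inner_vec_def sum_3)

lemma vec4_eq: "(x::real^4) = y \<longleftrightarrow> x$1 = y$1 \<and> x$2 = y$2 \<and> x$3 = y$3 \<and> x$4 = y$4"
  by (simp add: vec_eq_iff forall_4)

lemma vec3_eq: "(x::real^3) = y \<longleftrightarrow> x$1 = y$1 \<and> x$2 = y$2 \<and> x$3 = y$3"
  by (simp add: vec_eq_iff forall_3)

lemma unit3: "norm (u::real^3) = 1 \<Longrightarrow> u$1 * u$1 + u$2 * u$2 + u$3 * u$3 = 1"
  by (metis inner3 norm_eq_1)

lemma MM0: "Mm u (Mm u x) = (inner u u) *\<^sub>R x"
  by (simp add: vec4_eq Mc inner3 algebra_simps)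

lemma anti: "Mm u (Mm v x) + Mm v (Mm u x) = (2 * inner u v) *\<^sub>R x"
  by (simp add: vec4_eq Mc inner3 algebra_simps)

lemma Msym: "inner (Mm u x) y = inner x (Mm u y)"
  by (simp add: inner4 Mc algebra_simps)

lemma MJ: "Mm u (Jm x) = Jm (Mm u x)"
  by (simp add: vec4_eq Mc comps algebra_simps)

lemma xJ: "inner x (Jm x) = 0"
  by (simp add: inner4 comps algebra_simps)

lemma JJ: "inner (Jm x) (Jm x) = inner x x"
  by (simp add: inner4 comps algebra_simps)

lemma Mscale: "Mm (c *\<^sub>R u) x = c *\<^sub>R Mm u x"
  by (simp add: Mm_def algebra_simps)

lemma Mneg: "Mm (- u) x = - Mm u x"
  by (simp add: Mm_def algebra_simps)

lemma Madd: "Mm u (x + y) = Mm u x + Mm u y"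
  by (simp add: vec4_eq Mc algebra_simps)

lemma Msc: "Mm u (c *\<^sub>R x) = c *\<^sub>R Mm u x"
  by (simp add: vec4_eq Mc algebra_simps)

lemma Mlin: "linear (Mm u)"
  by (rule linearI) (simp_all add: Madd Msc)

definition bw :: "real^4 \<Rightarrow> real^3" where
  "bw x = (\<chi> k. if k = 1 then x$1 * x$1 + x$2 * x$2 - x$3 * x$3 - x$4 * x$4
     else if k = 2 then 2 * (x$1 * x$3 + x$2 * x$4) else 2 * (x$1 * x$4 - x$2 * x$3))"

lemma bwc: "bw x $ 1 = x$1 * x$1 + x$2 * x$2 - x$3 * x$3 - x$4 * x$4"
  "bw x $ 2 = 2 * (x$1 * x$3 + x$2 * x$4)" "bw x $ 3 = 2 * (x$1 * x$4 - x$2 * x$3)"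
  by (simp_all add: bw_def)

lemma bwM: "Mm (bw x) x = (inner x x) *\<^sub>R x"
  by (simp add: vec4_eq Mc bwc inner4 algebra_simps)

lemma bwn: "inner (bw x) (bw x) = (inner x x) * (inner x x)"
  by (simp add: inner3 bwc inner4 algebra_simps)


definition P0 :: "real^3 \<Rightarrow> real^4 \<Rightarrow> real^4" where "P0 u x = (1/2) *\<^sub>R (x + Mm u x)"
definition l0 :: "real^3 \<Rightarrow> (real^4) set" where "l0 u = {x. Mm u x = x}"

lemma M0: "Mm u 0 = 0" using Msc[of u 0 0] by simp

lemma sub_l0: "subspace (l0 u)"
  unfolding subspace_def l0_def by (simp add: M0 Madd Msc)

lemma MMu: "norm u = 1 \<Longrightarrow> Mm u (Mm u x) = x"
  using MM0[of u x] by (simp add: norm_eq_1)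

lemma P0_in: "norm u = 1 \<Longrightarrow> P0 u x \<in> l0 u"
  by (simp add: l0_def P0_def Madd Msc MMu)

lemma P0_id: "x \<in> l0 u \<Longrightarrow> P0 u x = x"
  by (simp add: l0_def P0_def)

lemma P0_orth: "z \<in> l0 u \<Longrightarrow> inner (x - P0 u x) z = 0"
proof -
  assume z: "z \<in> l0 u"
  have "inner (x - P0 u x) z = (1/2) * (inner x z - inner (Mm u x) z)"
    by (simp add: P0_def inner_diff_left inner_add_left algebra_simps)
  also have "inner (Mm u x) z = inner x z" using z by (simp add: Msym l0_def)
  finally show ?thesis by simp
qed

lemma l0_int:
  assumes "norm u = 1" "norm v = 1" "u \<noteq> v" "x \<in> l0 u" "x \<in> l0 v"
  shows "x = 0"
proof -
  have "x + x = (2 * inner u v) *\<^sub>R x" using anti[of u v x] assms(4,5) by (simp add: l0_def)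
  then have "(2 - 2 * inner u v) *\<^sub>R x = 0" by (simp add: algebra_simps scaleR_2)
  moreover have "inner u v \<noteq> 1"
  proof
    assume "inner u v = 1"
    then have "inner (u - v) (u - v) = 0" using assms(1,2)
      by (simp add: inner_diff_left inner_diff_right inner_commute norm_eq_1)
    then show False using assms(3) by simp
  qed
  ultimately show ?thesis by simp
qed

lemma l0_nonzero:
  assumes "norm u = 1"
  obtains w where "w \<in> l0 u" "w \<noteq> 0"
proof (cases "u$1 = -1")
  case True
  have "P0 u (axis 3 1) $ 3 = 1" using True by (simp add: P0_def Mc axis_def)
  then show ?thesis using that[of "P0 u (axis 3 1)"] P0_in[OF assms] by fastforce
next
  case False
  have "P0 u (axis 1 1) $ 1 = (1 + u$1) / 2" by (simp add: P0_def Mc axis_def)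
  then have "P0 u (axis 1 1) $ 1 \<noteq> 0" using False by simp
  then show ?thesis using that[of "P0 u (axis 1 1)"] P0_in[OF assms] by fastforce
qed

lemma dim_l0_ge:
  assumes "norm u = 1" shows "dim (l0 u) \<ge> 2"
proof -
  obtain w where w: "w \<in> l0 u" "w \<noteq> 0" using l0_nonzero[OF assms] by blast
  have Jw: "Jm w \<in> l0 u" using w(1) by (simp add: l0_def MJ)
  have ind: "\<alpha> *\<^sub>R w + \<beta> *\<^sub>R Jm w = 0 \<Longrightarrow> \<alpha> = 0 \<and> \<beta> = 0" for \<alpha> \<beta>
  proof -
    assume h: "\<alpha> *\<^sub>R w + \<beta> *\<^sub>R Jm w = 0"
    have "inner (\<alpha> *\<^sub>R w + \<beta> *\<^sub>R Jm w) w = 0" "inner (\<alpha> *\<^sub>R w + \<beta> *\<^sub>R Jm w) (Jm w) = 0"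
      using h by simp_all
    moreover have "inner (Jm w) w = 0" using xJ[of w] by (simp add: inner_commute)
    moreover have "inner w w > 0" "inner (Jm w) (Jm w) > 0" using w(2) JJ[of w] by auto
    ultimately show ?thesis by (simp add: inner_add_left xJ)
  qed
  have "independent {w, Jm w}" "w \<noteq> Jm w" using indep2[of w "Jm w"] ind by blast+
  moreover have "{w, Jm w} \<subseteq> l0 u" using w(1) Jw by auto
  ultimately have "card {w, Jm w} \<le> dim (l0 u)" using independent_card_le_dim by blast
  then show ?thesis using \<open>w \<noteq> Jm w\<close> by simp
qed

lemma dim_l0:
  assumes u: "norm u = 1" shows "dim (l0 u) = 2"
proof -
  have nu: "norm (- u) = 1" using u by simp
  have uu: "u \<noteq> - u"
  proof
    assume "u = - u"
    then have "(2::real) *\<^sub>R u = 0" by (metis add.right_inverse scaleR_2)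
    then have "u = 0" by simp
    then show False using u by simp
  qed
  have int: "l0 u \<inter> l0 (- u) = {0}" using l0_int[OF u nu uu] sub_l0 subspace_0 by blast
  have sum: "{x + y |x y. x \<in> l0 u \<and> y \<in> l0 (- u)} = UNIV"
  proof auto
    fix x
    have "P0 u x + P0 (- u) x = (1/2) *\<^sub>R (x + Mm u x) + (1/2) *\<^sub>R (x - Mm u x)"
      by (simp add: P0_def Mneg)
    also have "\<dots> = (1/2) *\<^sub>R ((x + Mm u x) + (x - Mm u x))" by (simp only: scaleR_add_right)
    also have "(x + Mm u x) + (x - Mm u x) = (2::real) *\<^sub>R x" by (simp add: scaleR_2)
    finally have "x = P0 u x + P0 (- u) x" by simp
    then show "\<exists>a b. x = a + b \<and> a \<in> l0 u \<and> b \<in> l0 (- u)" using P0_in[OF u] P0_in[OF nu] by blast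
  qed
  have "dim (UNIV::(real^4) set) + dim (l0 u \<inter> l0 (- u)) = dim (l0 u) + dim (l0 (- u))"
    using dim_sums_Int[OF sub_l0 sub_l0, of u "- u"] sum by simp
  then have "dim (l0 u) + dim (l0 (- u)) = 4" using int by simp
  then show ?thesis using dim_l0_ge[OF u] dim_l0_ge[OF nu] by linarith
qed

lemma l0_sum:
  assumes u: "norm u = 1" and v: "norm v = 1" and uv: "u \<noteq> v"
  shows "{x + y |x y. x \<in> l0 u \<and> y \<in> l0 v} = UNIV"
proof -
  have int: "l0 u \<inter> l0 v = {0}" using l0_int[OF u v uv] sub_l0 subspace_0 by blast
  define S where "S = {x + y |x y. x \<in> l0 u \<and> y \<in> l0 v}"
  have "dim S + dim (l0 u \<inter> l0 v) = dim (l0 u) + dim (l0 v)"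
    unfolding S_def by (rule dim_sums_Int[OF sub_l0 sub_l0])
  then have "dim S = 4" using int dim_l0[OF u] dim_l0[OF v] by simp
  then have sU: "span S = UNIV" using dim_eq_full[of S] by simp
  have "subspace S" unfolding S_def by (intro subspace_sums sub_l0)
  then have sS: "span S = S" by simp
  show ?thesis using sU sS unfolding S_def by metis
qed

lemma bloch:
  assumes "x \<noteq> 0" obtains u where "norm u = 1" "x \<in> l0 u"
proof -
  define N where "N = inner x x"
  have N: "N > 0" using assms by (simp add: N_def)
  define u where "u = (1 / N) *\<^sub>R bw x"
  have "Mm u x = x" using N by (simp add: u_def Mscale bwM N_def[symmetric])
  moreover have "inner u u = 1" using N by (simp add: u_def bwn N_def[symmetric])
  ultimately show ?thesis using that by (simp add: l0_def norm_eq_1)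
qed

locale femb =
  fixes idx :: "4 \<Rightarrow> 'n::finite"
  assumes inj: "inj idx"
begin

definition emb :: "real^4 \<Rightarrow> real^'n" where
  "emb x = (\<chi> j. if j \<in> range idx then x $ (inv idx j) else 0)"
definition res :: "real^'n \<Rightarrow> real^4" where
  "res y = (\<chi> k. y $ idx k)"

lemma emb_nth[simp]: "emb x $ idx k = x $ k"
  using inj by (simp add: emb_def)
lemma emb_out: "j \<notin> range idx \<Longrightarrow> emb x $ j = 0"
  by (simp add: emb_def)
lemma res_nth[simp]: "res y $ k = y $ idx k" by (simp add: res_def)
lemma res_emb[simp]: "res (emb x) = x" by (simp add: vec_eq_iff)
lemma emb_add[simp]: "emb (x + y) = emb x + emb y" by (simp add: emb_def vec_eq_iff)
lemma emb_scale[simp]: "emb (c *\<^sub>R x) = c *\<^sub>R emb x" by (simp add: emb_def vec_eq_iff)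
lemma emb_diff[simp]: "emb (x - y) = emb x - emb y" by (simp add: emb_def vec_eq_iff)
lemma emb_0[simp]: "emb 0 = 0" by (simp add: emb_def vec_eq_iff)
lemma res_add[simp]: "res (x + y) = res x + res y" by (simp add: vec_eq_iff)
lemma res_scale[simp]: "res (c *\<^sub>R x) = c *\<^sub>R res x" by (simp add: vec_eq_iff)
lemma res_diff[simp]: "res (x - y) = res x - res y" by (simp add: vec_eq_iff)
lemma res_0[simp]: "res 0 = 0" by (simp add: vec_eq_iff)
lemma lin_emb: "linear emb" by (rule linearI) simp_all
lemma lin_res: "linear res" by (rule linearI) simp_all
lemma emb_inj: "emb x = emb z \<Longrightarrow> x = z" by (metis res_emb)

lemma inner_emb: "inner y (emb x) = inner (res y) x"
proof -
  have "inner y (emb x) = (\<Sum>j\<in>UNIV. y $ j * emb x $ j)" by (simp add: inner_vec_def)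
  also have "\<dots> = (\<Sum>j\<in>range idx. y $ j * emb x $ j)"
    by (rule sum.mono_neutral_right) (auto simp: emb_out)
  also have "\<dots> = (\<Sum>k\<in>UNIV. y $ idx k * x $ k)"
    using sum.reindex[OF inj, of "\<lambda>j. y $ j * emb x $ j"] by simp
  also have "\<dots> = inner (res y) x" by (simp add: inner_vec_def)
  finally show ?thesis .
qed

lemma inner_emb': "inner (emb x) y = inner x (res y)"
  using inner_emb[of y x] by (simp add: inner_commute)

definition ell where "ell u = emb ` l0 u"
definition Wf where "Wf u = {y. res y \<in> l0 u}"
definition Eb where "Eb = {y :: real^'n. res y = 0}"

lemma sub_ell: "subspace (ell u)" unfolding ell_def by (rule linear_subspace_image[OF lin_emb sub_l0])
lemma sub_Wf: "subspace (Wf u)" unfolding Wf_def by (rule linear_subspace_linear_preimage[OF lin_res sub_l0])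
lemma sub_Eb: "subspace Eb"
proof -
  have "subspace {y. res y \<in> {0}}" by (rule linear_subspace_linear_preimage[OF lin_res]) (simp add: subspace_def)
  then show ?thesis by (simp add: Eb_def)
qed

lemma dim_emb_image: "dim (emb ` S) = dim S"
  by (rule dim_image_eq[OF lin_emb]) (auto intro: inj_onI emb_inj)

lemma dim_ell: "norm u = 1 \<Longrightarrow> dim (ell u) = 2"
  unfolding ell_def dim_emb_image by (rule dim_l0)

lemma ell_Wf: "ell u \<subseteq> Wf u" by (auto simp: ell_def Wf_def)

lemma dim_Eb: "dim Eb = CARD('n) - 4"
proof -
  have "0 \<in> range emb" using emb_0 by (metis rangeI)
  then have int: "Eb \<inter> range emb = {0}" by (auto simp: Eb_def)
  have sum: "{x + y |x y. x \<in> Eb \<and> y \<in> range emb} = UNIV"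
  proof auto
    fix y
    have "y = (y - emb (res y)) + emb (res y)" by simp
    moreover have "y - emb (res y) \<in> Eb" by (simp add: Eb_def)
    ultimately show "\<exists>a b. y = a + b \<and> a \<in> Eb \<and> b \<in> range emb" by blast
  qed
  have "dim {x + y |x y. x \<in> Eb \<and> y \<in> range emb} + dim (Eb \<inter> range emb) = dim Eb + dim (range emb)"
    by (rule dim_sums_Int[OF sub_Eb linear_subspace_image[OF lin_emb subspace_UNIV]])
  moreover have "dim (range emb) = 4" using dim_emb_image[of UNIV] by simp
  ultimately show ?thesis using int sum by simp
qed

lemma dim_range_emb: "dim (range emb) = 4" using dim_emb_image[of UNIV] by simp

lemma dim_Wf: "norm u = 1 \<Longrightarrow> dim (Wf u) = CARD('n) - 2"
proof -
  assume u: "norm u = 1"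
  have "0 \<in> ell u" using sub_ell subspace_0 by blast
  then have int: "ell u \<inter> Eb = {0}" by (auto simp: ell_def Eb_def)
  have sum: "{x + y |x y. x \<in> ell u \<and> y \<in> Eb} = Wf u"
  proof
    show "{x + y |x y. x \<in> ell u \<and> y \<in> Eb} \<subseteq> Wf u" by (auto simp: ell_def Eb_def Wf_def)
    show "Wf u \<subseteq> {x + y |x y. x \<in> ell u \<and> y \<in> Eb}"
    proof
      fix y assume y: "y \<in> Wf u"
      have "y = emb (res y) + (y - emb (res y))" by simp
      moreover have "emb (res y) \<in> ell u" using y by (simp add: ell_def Wf_def)
      moreover have "y - emb (res y) \<in> Eb" by (simp add: Eb_def)
      ultimately show "y \<in> {x + y |x y. x \<in> ell u \<and> y \<in> Eb}" by blast
    qed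
  qed
  have "dim {x + y |x y. x \<in> ell u \<and> y \<in> Eb} + dim (ell u \<inter> Eb) = dim (ell u) + dim Eb"
    by (rule dim_sums_Int[OF sub_ell sub_Eb])
  then have "dim (Wf u) = 2 + (CARD('n) - 4)" using int sum dim_ell[OF u] dim_Eb by simp
  moreover have "CARD('n) \<ge> 4" using card_inj_on_le[of idx UNIV UNIV] inj by simp
  ultimately show ?thesis by simp
qed

lemma cp_ell: "norm u = 1 \<Longrightarrow> closest_point (ell u) y = emb (P0 u (res y))"
proof (rule closest_point_subspace_char[OF sub_ell])
  assume u: "norm u = 1"
  show "emb (P0 u (res y)) \<in> ell u" using P0_in[OF u] by (simp add: ell_def)
  fix z assume "z \<in> ell u"
  then obtain w where w: "w \<in> l0 u" "z = emb w" by (auto simp: ell_def)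
  show "inner (y - emb (P0 u (res y))) z = 0" unfolding w(2) inner_emb
    using P0_orth[OF w(1)] by simp
qed

lemma cp_Wf: "norm u = 1 \<Longrightarrow> closest_point (Wf u) y = y - emb (res y) + emb (P0 u (res y))"
proof (rule closest_point_subspace_char[OF sub_Wf])
  assume u: "norm u = 1"
  show "y - emb (res y) + emb (P0 u (res y)) \<in> Wf u" using P0_in[OF u] by (simp add: Wf_def)
  fix z assume z: "z \<in> Wf u"
  have "inner (y - (y - emb (res y) + emb (P0 u (res y)))) z = inner (emb (res y - P0 u (res y))) z"
    by (simp add: algebra_simps)
  also have "\<dots> = inner (res y - P0 u (res y)) (res z)" by (rule inner_emb')
  also have "\<dots> = 0" using P0_orth[of "res z" u "res y"] z by (simp add: Wf_def)
  finally show "inner (y - (y - emb (res y) + emb (P0 u (res y)))) z = 0" .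
qed

lemma dsum_ell_Wf:
  assumes u: "norm u = 1" and v: "norm v = 1" and uv: "u \<noteq> v"
  shows "dsum_univ (ell u) (Wf v)"
  unfolding dsum_univ_def
proof
  show "ell u \<inter> Wf v = {0}"
  proof
    show "ell u \<inter> Wf v \<subseteq> {0}"
    proof
      fix y assume "y \<in> ell u \<inter> Wf v"
      then obtain x where x: "x \<in> l0 u" "y = emb x" "x \<in> l0 v" by (auto simp: ell_def Wf_def)
      then have "x = 0" using l0_int[OF u v uv] by blast
      then show "y \<in> {0}" using x by simp
    qed
    show "{0} \<subseteq> ell u \<inter> Wf v" using sub_ell sub_Wf subspace_0 by blast
  qed
  show "{a + b |a b. a \<in> ell u \<and> b \<in> Wf v} = UNIV"
  proof auto
    fix y
    obtain a b where ab: "res y = a + b" "a \<in> l0 u" "b \<in> l0 v" using l0_sum[OF u v uv] by blast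
    have "y = emb a + (y - emb a)" by simp
    moreover have "emb a \<in> ell u" using ab by (simp add: ell_def)
    moreover have "y - emb a \<in> Wf v" using ab by (simp add: Wf_def)
    ultimately show "\<exists>p q. y = p + q \<and> p \<in> ell u \<and> q \<in> Wf v" by blast
  qed
qed

lemma not_dsum:
  assumes "subspace Y" "dim Y = CARD('n) - 2"
  shows "\<exists>u. norm u = 1 \<and> \<not> dsum_univ (ell u) Y"
proof -
  have "CARD('n) \<ge> 4" using card_inj_on_le[of idx UNIV UNIV] inj by simp
  have "dim {x + y |x y. x \<in> Y \<and> y \<in> range emb} + dim (Y \<inter> range emb) = dim Y + dim (range emb)"
    by (rule dim_sums_Int[OF assms(1) linear_subspace_image[OF lin_emb subspace_UNIV]])
  moreover have "dim {x + y |x y. x \<in> Y \<and> y \<in> range emb} \<le> CARD('n)"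
    using dim_subset_UNIV[of "{x + y |x y. x \<in> Y \<and> y \<in> range emb}"] by simp
  ultimately have "dim (Y \<inter> range emb) \<noteq> 0" using assms(2) dim_range_emb \<open>CARD('n) \<ge> 4\<close> by linarith
  then have "\<not> (Y \<inter> range emb \<subseteq> {0})" by simp
  then obtain y where y: "y \<in> Y" "y \<in> range emb" "y \<noteq> 0" by blast
  then obtain x where x: "y = emb x" by auto
  then have "x \<noteq> 0" using y(3) by auto
  then obtain u where u: "norm u = 1" "x \<in> l0 u" using bloch by blast
  have "y \<in> ell u \<inter> Y" using u x y by (simp add: ell_def)
  then have "\<not> dsum_univ (ell u) Y" using y(3) by (auto simp: dsum_univ_def)
  then show ?thesis using u by blast
qed

end

context femb begin

definition fl where "fl u = (ell u, Wf u)"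

lemma res_axis: "res (axis (idx j) 1) = axis j 1"
  using inj by (simp add: vec_eq_iff axis_def inj_eq)

lemma flag_emb_fl:
  assumes "norm u = 1"
  shows "flag_emb (fl u) = (matrix (\<lambda>y. emb (P0 u (res y))), matrix (\<lambda>y. y - emb (res y) + emb (P0 u (res y))))"
proof -
  have "closest_point (ell u) = (\<lambda>y. emb (P0 u (res y)))" using cp_ell[OF assms] by (rule ext)
  moreover have "closest_point (Wf u) = (\<lambda>y. y - emb (res y) + emb (P0 u (res y)))" using cp_Wf[OF assms] by (rule ext)
  ultimately show ?thesis by (simp add: flag_emb_def fl_def proj_mat_def)
qed

lemma embP0: "emb (P0 u x) = (1/2) *\<^sub>R (emb x + (u$1 *\<^sub>R emb (Am x) + u$2 *\<^sub>R emb (Bm x) + u$3 *\<^sub>R emb (Cm x)))"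
  by (simp add: P0_def Mm_def)

lemma homeo1: "(flag_emb ` (fl ` sphere (0::real^3) 1)) homeomorphic (sphere (0::real^3) 1)"
proof -
  define S where "S = sphere (0::real^3) 1"
  define F where "F u = (matrix (\<lambda>y. emb (P0 u (res y))), matrix (\<lambda>y. y - emb (res y) + emb (P0 u (res y))))" for u
  have FS: "u \<in> S \<Longrightarrow> flag_emb (fl u) = F u" for u using flag_emb_fl by (simp add: S_def F_def)
  have cont: "continuous_on S F"
    unfolding F_def embP0 by (intro continuous_intros continuous_on_matrix)
  have inj1: "inj_on F S"
  proof (rule inj_onI)
    fix u v assume "u \<in> S" "v \<in> S" "F u = F v"
    then have m: "matrix (\<lambda>y. emb (P0 u (res y))) = matrix (\<lambda>y. emb (P0 v (res y)))" by (simp add: F_def)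
    have "matrix (\<lambda>y. emb (P0 u (res y))) $ idx k $ idx 1 = P0 u (axis 1 1) $ k" for u k
      by (simp add: matrix_def res_axis)
    then have e: "P0 u (axis 1 1) $ k = P0 v (axis 1 1) $ k" for k using m by metis
    have c: "P0 w (axis 1 1) $ 1 = (1 + w$1) / 2" "P0 w (axis 1 1) $ 3 = w$2 / 2" "P0 w (axis 1 1) $ 4 = w$3 / 2" for w
      by (simp_all add: P0_def Mc axis_def)
    show "u = v" using e[of 1] e[of 3] e[of 4] by (simp add: c vec3_eq)
  qed
  have im: "F ` S = flag_emb ` (fl ` S)" using FS by (auto simp: image_image)
  have "S homeomorphic (flag_emb ` (fl ` S))"
    by (rule homeomorphic_compact[OF _ cont im inj1]) (simp add: S_def)
  then show ?thesis unfolding S_def using homeomorphic_sym by blast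
qed

lemma maxanti1: "max_antipodal flag22 flag_antipodal (fl ` sphere (0::real^3) 1)"
  unfolding max_antipodal_def antipodal_set_def
proof (intro conjI ballI impI)
  show "fl ` sphere 0 1 \<subseteq> flag22"
    using sub_ell sub_Wf dim_ell dim_Wf by (auto simp: flag22_def fl_def intro: ell_Wf[THEN subsetD])
next
  fix p q assume "p \<in> fl ` sphere 0 1" "q \<in> fl ` sphere 0 1" "p \<noteq> q"
  then obtain u v where "norm u = 1" "norm v = 1" "p = fl u" "q = fl v" "u \<noteq> v" by (metis imageE mem_sphere_0)
  then show "flag_antipodal p q" using dsum_ell_Wf by (auto simp: flag_antipodal_def fl_def)
next
  fix x :: "(real^'n) set \<times> (real^'n) set" assume "x \<in> flag22"
  then obtain X Y where x: "x = (X, Y)" "subspace Y" "dim Y = CARD('n) - 2" by (auto simp: flag22_def)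
  then obtain u where "norm u = 1" "\<not> dsum_univ (ell u) Y" using not_dsum by blast
  then show "\<exists>y\<in>fl ` sphere 0 1. \<not> flag_antipodal x y"
    using x by (intro bexI[of _ "fl u"]) (auto simp: flag_antipodal_def fl_def)
qed

end

lemma part1:
  assumes "CARD('n) \<ge> 4"
  shows "\<exists>L :: ((real^'n) set \<times> (real^'n) set) set.
            max_antipodal flag22 flag_antipodal L \<and>
            (flag_emb ` L) homeomorphic (sphere (0 :: real^3) 1)"
proof -
  obtain idx :: "4 \<Rightarrow> 'n" where "inj_on idx UNIV"
    using card_le_inj[of "UNIV :: 4 set" "UNIV :: 'n set"] assms by auto
  then interpret femb idx by (simp add: femb_def)
  show ?thesis using maxanti1 homeo1 by blast
qed

lemma part2:
  fixes \<omega> :: "real^'n \<Rightarrow> real^'n \<Rightarrow> real"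
  assumes card: "CARD('n) = 2 * n" and n2: "n \<ge> 2" and sf: "symplectic_form \<omega>"
  shows "\<exists>L :: (real^'n) set set.
            max_antipodal (iso2 \<omega>) (iso_antipodal \<omega>) L \<and>
            (\<exists>U :: (real^'n) set. subspace U \<and> dim U = 2 * n - 2 \<and>
               (proj_mat ` L) homeomorphic (sphere 0 1 \<inter> U))"
proof -
  interpret symp \<omega> by (rule symp.intro[OF sf])
  obtain i :: 'n where True by blast
  define x :: "real^'n" where "x = axis i 1"
  have x0: "x \<noteq> 0" by (simp add: x_def axis_eq_0_iff)
  then obtain y where y: "\<omega> x y \<noteq> 0" using nondeg by blast
  define e where "e = x"
  define f where "f = (1 / \<omega> x y) *\<^sub>R y"
  have ef: "\<omega> e f = 1" using y by (simp add: e_def f_def)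
  define C where "C = {z. \<omega> e z = 0 \<and> \<omega> f z = 0}"
  have ndU: "nondeg_on UNIV" unfolding nondeg_on_def using nondeg by blast
  note R = reduce[OF subspace_UNIV UNIV_I UNIV_I ef]
  have CeqV: "{z \<in> UNIV. \<omega> e z = 0 \<and> \<omega> f z = 0} = C" by (simp add: C_def)
  have subC: "subspace C" and ndC: "nondeg_on C" using R(1) R(5)[OF ndU] unfolding CeqV by auto
  obtain K where K: "linear K" "\<forall>v\<in>C. K v \<in> C" "\<forall>v\<in>C. K (K v) = - v"
    "\<forall>u\<in>C. \<forall>v\<in>C. \<omega> u (K v) = \<omega> v (K u)" "\<forall>u\<in>C. u \<noteq> 0 \<longrightarrow> \<omega> u (K u) < 0"
    using compat[OF subC ndC] by blast
  interpret sympK \<omega> e f K C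
  proof (rule sympK.intro)
    show "symp \<omega>" by (rule symp.intro[OF sf])
    show "sympK_axioms \<omega> e f K C"
      by (rule sympK_axioms.intro) (use ef K in \<open>auto simp: C_def\<close>)
  qed
  have dC: "dim C = 2 * n - 2" using dimC card by simp
  have "max_antipodal (iso2 \<omega>) (iso_antipodal \<omega>) (Y ` S)"
    unfolding max_antipodal_def antipodal_set_def
  proof (intro conjI ballI impI)
    show "Y ` S \<subseteq> iso2 \<omega>" using Y_iso2 by auto
  next
    fix p q assume "p \<in> Y ` S" "q \<in> Y ` S" "p \<noteq> q"
    then obtain u v where "u \<in> S" "v \<in> S" "p = Y u" "q = Y v" "u \<noteq> v" by auto
    then show "iso_antipodal \<omega> p q" using Y_antipodal by simp
  next
    fix X assume "X \<in> iso2 \<omega>"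
    moreover have "dim C \<ge> 2" using dC n2 by simp
    ultimately obtain u where "u \<in> S" "\<not> iso_antipodal \<omega> X (Y u)" using maximal by blast
    then show "\<exists>y\<in>Y ` S. \<not> iso_antipodal \<omega> X y" by blast
  qed
  moreover have "subspace C" by (rule subC)
  ultimately show ?thesis using dC homeo by blast
qed

theorem theorem1p2:
  fixes n :: nat
  assumes "n \<ge> 2" and "CARD('n) = 2 * n"
  shows "(\<exists>L :: ((real^'n) set \<times> (real^'n) set) set.
            max_antipodal flag22 flag_antipodal L \<and>
            (flag_emb ` L) homeomorphic (sphere (0 :: real^3) 1))
       \<and> (\<forall>\<omega> :: real^'n \<Rightarrow> real^'n \<Rightarrow> real. symplectic_form \<omega> \<longrightarrow>
          (\<exists>L :: (real^'n) set set.
            max_antipodal (iso2 \<omega>) (iso_antipodal \<omega>) L \<and>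
            (\<exists>U :: (real^'n) set. subspace U \<and> dim U = 2 * n - 2 \<and>
               (proj_mat ` L) homeomorphic (sphere 0 1 \<inter> U))))"
  proof -
  have c4: "CARD('n) \<ge> 4" using assms by simp
  have A: "\<exists>L :: ((real^'n) set \<times> (real^'n) set) set.
            max_antipodal flag22 flag_antipodal L \<and>
            (flag_emb ` L) homeomorphic (sphere (0 :: real^3) 1)" by (rule part1[OF c4])
  show ?thesis using A part2[OF assms(2) assms(1)] by blast
qed

end
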